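(* Assume $k$ is separably closed (so $f$ splits over $k$, with roots $\omega_1,\dots,\omega_{2g+1}$). Then there exist subsets $I_1,\dots,I_{2^g}\subseteq\{1,\dots,2g+1\}$, each of cardinality $g$, such that the vectors $M_{I_1}\cdot1,\dots,M_{I_{2^g}}\cdot1$ form a basis of $S$. (Equivalently, there are $2^g$ points of $J[2](k)$ of Mumford degree $g$, namely the classes of $\sum_{i\in I_j}(\omega_i,0)-gP_\infty$, whose associated vectors $M_{I_j}\cdot 1$ are linearly independent.)
   Context: Let $k$ be a field of characteristic $\neq2$, $g\ge1$, $f(x)=x^{2g+1}+c_1x^{2g}+\dots+c_{2g+1}\in k[x]$ of nonzero discriminant, $C$ the curve $y^2=f(x)$ with point at infinity $P_\infty$, $J$ its Jacobian. Quadratic space $V_f=k[x]/(f)$, $\psi(a,b)=\tau(ab)$ with $\tau(\sum_{i\le 2g}a_ix^i)=a_{2g}$; basis $p_i=x^i$ ($0\le i\le g$), $p_{g+i}=x^{g+i}+c_1x^{g+i-1}+\dots+c_{2i-1}x^{g-i+1}+\tfrac12c_{2i}x^{g-i}$ ($1\le i\le g$), with $\psi(p_i,p_j)=\delta_{i+j,2g}$. $F=\langle p_0,..,p_{g-1}\rangle$, $E=\langle p_{g+1},..,p_{2g}\rangle$; Clifford algebra $C(V_f)$ = tensor algebra modulo $v\otimes v-\psi(v,v)$; spin representation $S=\bigwedge^*E$ with: $e\in E$ acting by $e\wedge-$, $f'\in F$ by $w_1\wedge\cdots\wedge w_r\mapsto\sum_i(-1)^{i-1}2\psi(f',w_i)w_1\wedge\cdots\widehat{w_i}\cdots\wedge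 w_r$, $p_g$ by $(-1)^r$ on $\bigwedge^rE$; $1\in\bigwedge^0E\subset S$. Operators $M_I$: $\epsilon_i=\prod_{j\ne i}(x-\omega_j)\in V_f$; for $I=\{i_1<\dots<i_r\}\subseteq\{1,\dots,2g+1\}$, $\delta_I=\prod_{1\le j<l\le r}(\omega_{i_l}-\omega_{i_j})$, and $M_I\in\mathrm{End}(S)$ is the action of $\delta_I^{-1}\epsilon_{i_1}\cdots\epsilon_{i_r}\in C(V_f)$ (Clifford product). *)

theory Defs
  imports "HOL-Computational_Algebra.Polynomial"
begin

definition separably_closed :: "'a::field itself \<Rightarrow> bool" where
  "separably_closed _ \<longleftrightarrow>
     (\<forall>p::'a poly. degree p \<ge> 1 \<longrightarrow> coprime p (pderiv p) \<longrightarrow> (\<exists>x. poly p x = 0))"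

text \<open>Elements of V_f are represented by polynomials (taken modulo f).
 g is the genus, deg f = 2g+1.\<close>

definition ccoef :: "nat \<Rightarrow> 'a::field poly \<Rightarrow> nat \<Rightarrow> 'a" where
  "ccoef g f j = coeff f (2*g+1-j)"

definition tauV :: "nat \<Rightarrow> 'a::field poly \<Rightarrow> 'a poly \<Rightarrow> 'a" where
  "tauV g f a = coeff (a mod f) (2*g)"

definition psiV :: "nat \<Rightarrow> 'a::field poly \<Rightarrow> 'a poly \<Rightarrow> 'a poly \<Rightarrow> 'a" where
  "psiV g f a b = tauV g f (a * b)"

definition pbas :: "nat \<Rightarrow> 'a::field poly \<Rightarrow> nat \<Rightarrow> 'a poly" where
  "pbas g f n = (if n \<le> g then monom 1 n
     else (let i = n - g in
        monom 1 (g+i)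
        + (\<Sum>j\<in>{1..2*i-1}. monom (ccoef g f j) (g+i-j))
        + monom (ccoef g f (2*i) / 2) (g-i)))"

text \<open>Coordinates with respect to the basis p (using psi(p_i,p_j) = delta_{i+j,2g}):
 coordinate of v on p_n is psi(v, p_{2g-n}).\<close>
definition pcoord :: "nat \<Rightarrow> 'a::field poly \<Rightarrow> 'a poly \<Rightarrow> nat \<Rightarrow> 'a" where
  "pcoord g f v n = psiV g f v (pbas g f (2*g - n))"

text \<open>E has basis p_{g+1},...,p_{2g}; the index i \<in> {1..g} stands for p_{g+i}.
 An element of S is a function from subsets J \<subseteq> {1..g} to k, the coefficient
 of the basis vector p_{g+j_1} \<and> ... \<and> p_{g+j_r} (j_1 < ... < j_r, J = {j_1..j_r});
 it is required to vanish outside Pow {1..g}.\<close>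

definition spin_space :: "nat \<Rightarrow> (nat set \<Rightarrow> 'a::field) set" where
  "spin_space g = {s. \<forall>K. K \<notin> Pow {1..g} \<longrightarrow> s K = 0}"

definition sbasis :: "nat set \<Rightarrow> nat set \<Rightarrow> 'a::field" where
  "sbasis J = (\<lambda>K. if K = J then 1 else 0)"

definition wsign :: "nat set \<Rightarrow> nat \<Rightarrow> 'a::field" where
  "wsign J i = (-1) ^ card {j\<in>J. j < i}"

definition wedge_e :: "nat \<Rightarrow> nat set \<Rightarrow> nat set \<Rightarrow> 'a::field" where
  "wedge_e i J = (if i \<in> J then (\<lambda>K. 0) else (\<lambda>K. wsign J i * sbasis (insert i J) K))"

text \<open>Action of p_{g-i} (which pairs to 1 with p_{g+i}) on basis vectors:
 w_1\<and>...\<and>w_r \<mapsto> \<Sum>_l (-1)^(l-1) 2 psi(p_{g-i}, w_l) w_1\<and>..(omit w_l)..\<and>w_r.\<close>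
definition contr_f :: "nat \<Rightarrow> nat set \<Rightarrow> nat set \<Rightarrow> 'a::field" where
  "contr_f i J = (if i \<in> J then (\<lambda>K. 2 * wsign J i * sbasis (J - {i}) K) else (\<lambda>K. 0))"

text \<open>Action of p_g: (-1)^r on \<And>^r E.\<close>
definition act_pg :: "nat set \<Rightarrow> nat set \<Rightarrow> 'a::field" where
  "act_pg J = (\<lambda>K. (-1) ^ card J * sbasis J K)"

definition vact_basis :: "nat \<Rightarrow> 'a::field poly \<Rightarrow> 'a poly \<Rightarrow> nat set \<Rightarrow> nat set \<Rightarrow> 'a" where
  "vact_basis g f v J = (\<lambda>K.
      (\<Sum>i\<in>{1..g}. pcoord g f v (g+i) * wedge_e i J K)
    + (\<Sum>i\<in>{1..g}. pcoord g f v (g-i) * contr_f i J K)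
    + pcoord g f v g * act_pg J K)"

definition vact :: "nat \<Rightarrow> 'a::field poly \<Rightarrow> 'a poly \<Rightarrow> (nat set \<Rightarrow> 'a) \<Rightarrow> (nat set \<Rightarrow> 'a)" where
  "vact g f v s = (\<lambda>K. \<Sum>J\<in>Pow {1..g}. s J * vact_basis g f v J K)"

text \<open>Action of a Clifford product v_1 v_2 ... v_r: v_1 acting last.\<close>
fun vact_list :: "nat \<Rightarrow> 'a::field poly \<Rightarrow> 'a poly list \<Rightarrow> (nat set \<Rightarrow> 'a) \<Rightarrow> (nat set \<Rightarrow> 'a)" where
  "vact_list g f [] s = s"
| "vact_list g f (v # vs) s = vact g f v (vact_list g f vs s)"

definition one_S :: "nat set \<Rightarrow> 'a::field" where
  "one_S = sbasis {}"

definition eps :: "nat \<Rightarrow> (nat \<Rightarrow> 'a::field) \<Rightarrow> nat \<Rightarrow> 'a poly" where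
  "eps g \<omega> i = (\<Prod>j\<in>{1..2*g+1} - {i}. [:- \<omega> j, 1:])"

definition deltaI :: "(nat \<Rightarrow> 'a::field) \<Rightarrow> nat set \<Rightarrow> 'a" where
  "deltaI \<omega> I = (\<Prod>(a, b)\<in>{(a, b). a \<in> I \<and> b \<in> I \<and> a < b}. \<omega> b - \<omega> a)"

definition MI :: "nat \<Rightarrow> 'a::field poly \<Rightarrow> (nat \<Rightarrow> 'a) \<Rightarrow> nat set \<Rightarrow> (nat set \<Rightarrow> 'a) \<Rightarrow> (nat set \<Rightarrow> 'a)" where
  "MI g f \<omega> I s = (\<lambda>K. inverse (deltaI \<omega> I) *
      vact_list g f (map (eps g \<omega>) (sorted_list_of_set I)) s K)"

end

theory Submission
  imports Defs "HOL-Library.Function_Algebras"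
begin


lemma fun_sum_apply: "(\<Sum>x\<in>A. F x) K = (\<Sum>x\<in>A. F x K)"
  by (induct A rule: infinite_finite_induct) auto

definition Wop :: "nat \<Rightarrow> (nat set \<Rightarrow> 'a::field) \<Rightarrow> nat set \<Rightarrow> 'a" where
  "Wop i s K = (if i \<in> K then wsign (K - {i}) i * s (K - {i}) else 0)"
definition Cop :: "nat \<Rightarrow> (nat set \<Rightarrow> 'a::field) \<Rightarrow> nat set \<Rightarrow> 'a" where
  "Cop i s K = (if i \<in> K then 0 else 2 * wsign K i * s (insert i K))"
definition Gop :: "(nat set \<Rightarrow> 'a::field) \<Rightarrow> nat set \<Rightarrow> 'a" where
  "Gop s K = (-1) ^ card K * s K"

lemma wsign_insert: "j \<notin> K \<Longrightarrow> wsign (insert j K) i = (if j < i then - wsign K i else (wsign K i :: 'a::field))"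
proof -
  assume j: "j \<notin> K"
  have fin: "finite {x\<in>K. x < i}" by auto
  show ?thesis
  proof (cases "j < i")
    case True
    have "{x\<in>insert j K. x < i} = insert j {x\<in>K. x < i}" using True by auto
    then show ?thesis using True j fin by (simp add: wsign_def)
  next
    case False
    have "{x\<in>insert j K. x < i} = {x\<in>K. x < i}" using False by auto
    then show ?thesis using False by (simp add: wsign_def)
  qed
qed

lemma wsign_remove: "j \<in> K \<Longrightarrow> wsign (K - {j}) i = (if j < i then - wsign K i else (wsign K i :: 'a::field))"
proof -
  assume j: "j \<in> K"
  have "K = insert j (K - {j})" using j by auto
  then have "wsign K i = (if j < i then - wsign (K - {j}) i else (wsign (K - {j}) i :: 'a))"
    by (metis Diff_iff insertI1 wsign_insert)
  then show ?thesis by auto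
qed

lemma wsign_self_insert: "wsign (insert i K) i = wsign K i"
proof -
  have "{x\<in>insert i K. x < i} = {x\<in>K. x < i}" by auto
  then show ?thesis by (simp add: wsign_def)
qed

lemma wsign_self_remove: "wsign (K - {i}) i = wsign K i"
proof -
  have "{x\<in>K - {i}. x < i} = {x\<in>K. x < i}" by auto
  then show ?thesis by (simp add: wsign_def)
qed

lemma wsign_sq: "wsign K i * wsign K i = (1::'a::field)"
  by (simp add: wsign_def flip: power_add)

lemma WW: "Wop i (Wop j s) K + Wop j (Wop i s) K = (0::'a::field)"
proof (cases "i = j")
  case True then show ?thesis by (simp add: Wop_def)
next
  case False
  show ?thesis
  proof (cases "i \<in> K \<and> j \<in> K")
    case True
    have e: "K - {i} - {j} = K - {j} - {i}" by auto
    show ?thesis using True False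
      by (auto simp: Wop_def wsign_remove wsign_self_remove e)
  next
    case False then show ?thesis by (auto simp: Wop_def)
  qed
qed


lemma CC: "Cop i (Cop j s) K + Cop j (Cop i s) K = (0::'a::field)"
proof (cases "i = j")
  case True then show ?thesis by (simp add: Cop_def)
next
  case False
  show ?thesis
  proof (cases "i \<notin> K \<and> j \<notin> K")
    case True
    have e: "insert i (insert j K) = insert j (insert i K)" by auto
    show ?thesis using True False
      by (auto simp: Cop_def wsign_insert wsign_self_insert e)
  next
    case False then show ?thesis by (auto simp: Cop_def)
  qed
qed

lemma WC: "Wop i (Cop j s) K + Cop j (Wop i s) K = (if i = j then 2 * s K else (0::'a::field))"
proof (cases "i = j")
  case True
  show ?thesis
  proof (cases "i \<in> K")
    case True
    then have "insert i (K - {i}) = K" by auto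
    then show ?thesis using True \<open>i = j\<close> by (simp add: Wop_def Cop_def wsign_self_remove wsign_sq mult.assoc[symmetric])
  next
    case False
    then have "insert i K - {i} = K" by auto
    then show ?thesis using False \<open>i = j\<close> by (simp add: Wop_def Cop_def wsign_self_insert)
         (simp add: mult.assoc[symmetric] wsign_sq)
  qed
next
  case False
  show ?thesis
  proof (cases "i \<in> K \<and> j \<notin> K")
    case True
    have e: "insert j (K - {i}) = insert j K - {i}" using False by auto
    show ?thesis using True False
      by (auto simp: Wop_def Cop_def wsign_insert wsign_remove wsign_self_remove wsign_self_insert e)
  next
    case False then show ?thesis using \<open>i \<noteq> j\<close> by (auto simp: Wop_def Cop_def)
  qed
qed

lemma GW:
  assumes "\<And>K. infinite K \<Longrightarrow> s K = 0"
  shows "Gop (Wop i s) K + Wop i (Gop s) K = (0::'a::field)"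
proof (cases "i \<in> K")
  case True
  show ?thesis
  proof (cases "finite K")
    case True
    then obtain n where n: "card K = Suc n" "card (K - {i}) = n" using \<open>i \<in> K\<close>
      by (metis card_Suc_Diff1)
    then show ?thesis using \<open>i \<in> K\<close> by (simp add: Wop_def Gop_def)
  next
    case False
    then show ?thesis using assms[of "K - {i}"] by (simp add: Wop_def Gop_def)
  qed
next
  case False then show ?thesis by (simp add: Wop_def Gop_def)
qed

lemma GC:
  assumes "\<And>K. infinite K \<Longrightarrow> s K = 0"
  shows "Gop (Cop i s) K + Cop i (Gop s) K = (0::'a::field)"
proof (cases "i \<in> K")
  case False
  show ?thesis
  proof (cases "finite K")
    case True
    then have "card (insert i K) = Suc (card K)" using \<open>i \<notin> K\<close> by simp
    then show ?thesis using \<open>i \<notin> K\<close> by (simp add: Cop_def Gop_def)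
  next
    case False
    then show ?thesis using assms[of "insert i K"] by (simp add: Cop_def Gop_def)
  qed
next
  case True then show ?thesis by (simp add: Cop_def Gop_def)
qed

lemma GG: "Gop (Gop s) K = (s K :: 'a::field)"
  by (simp add: Gop_def flip: mult.assoc power_add)

definition Xop :: "nat \<Rightarrow> (nat \<Rightarrow> 'a::field) \<Rightarrow> (nat \<Rightarrow> 'a) \<Rightarrow> 'a \<Rightarrow> (nat set \<Rightarrow> 'a) \<Rightarrow> nat set \<Rightarrow> 'a" where
  "Xop g up um u0 s = (\<lambda>K. (\<Sum>i\<in>{1..g}. up i * Wop i s K) + (\<Sum>i\<in>{1..g}. um i * Cop i s K) + u0 * Gop s K)"

lemma Wop_Xop: "Wop i (Xop g up um u0 s) K = (\<Sum>j\<in>{1..g}. up j * Wop i (Wop j s) K)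
   + (\<Sum>j\<in>{1..g}. um j * Wop i (Cop j s) K) + u0 * Wop i (Gop s) K"
  by (cases "i \<in> K") (simp_all add: Xop_def Wop_def[of i] sum_distrib_left algebra_simps)

lemma Cop_Xop: "Cop i (Xop g up um u0 s) K = (\<Sum>j\<in>{1..g}. up j * Cop i (Wop j s) K)
   + (\<Sum>j\<in>{1..g}. um j * Cop i (Cop j s) K) + u0 * Cop i (Gop s) K"
  by (cases "i \<in> K") (simp_all add: Xop_def Cop_def[of i] sum_distrib_left algebra_simps)

lemma Gop_Xop: "Gop (Xop g up um u0 s) K = (\<Sum>j\<in>{1..g}. up j * Gop (Wop j s) K)
   + (\<Sum>j\<in>{1..g}. um j * Gop (Cop j s) K) + u0 * Gop (Gop s) K"
  by (simp add: Xop_def Gop_def sum_distrib_left algebra_simps)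


lemma WC': "Cop j (Wop i s) K + Wop i (Cop j s) K = (if i = j then 2 * s K else (0::'a::field))"
  using WC[of i j s K] by (simp add: add.commute)
lemma GW':
  assumes "\<And>K. infinite K \<Longrightarrow> s K = 0"
  shows "Wop i (Gop s) K + Gop (Wop i s) K = (0::'a::field)"
  using GW[OF assms] by (simp add: add.commute)
lemma GC':
  assumes "\<And>K. infinite K \<Longrightarrow> s K = 0"
  shows "Cop i (Gop s) K + Gop (Cop i s) K = (0::'a::field)"
  using GC[OF assms] by (simp add: add.commute)

lemma pair2: "(\<Sum>i\<in>A. \<Sum>j\<in>A. a i * b j * P i j) + (\<Sum>i\<in>A. \<Sum>j\<in>A. b i * a j * Q i j)
   = (\<Sum>i\<in>A. \<Sum>j\<in>A. a i * b j * (P i j + Q j i :: 'a::comm_ring))"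
proof -
  have "(\<Sum>i\<in>A. \<Sum>j\<in>A. b i * a j * Q i j) = (\<Sum>i\<in>A. \<Sum>j\<in>A. a i * b j * Q j i)"
    by (subst sum.swap) (simp add: mult.commute)
  then show ?thesis by (simp add: sum.distrib[symmetric] distrib_left)
qed

lemma pair1: "(\<Sum>i\<in>A. a i * c * P i) + (\<Sum>j\<in>A. c * a j * Q j)
   = (\<Sum>i\<in>A. a i * c * (P i + Q i :: 'a::comm_ring))"
  by (simp add: sum.distrib[symmetric] distrib_left mult.commute mult.left_commute)

definition Bf :: "nat \<Rightarrow> (nat \<Rightarrow> 'a::field) \<Rightarrow> (nat \<Rightarrow> 'a) \<Rightarrow> 'a \<Rightarrow> (nat \<Rightarrow> 'a) \<Rightarrow> (nat \<Rightarrow> 'a) \<Rightarrow> 'a \<Rightarrow> 'a" where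
  "Bf g up um u0 vp vm v0 = (\<Sum>i\<in>{1..g}. up i * vm i + um i * vp i) + u0 * v0"

lemma Xop_expand: "Xop g up um u0 (Xop g vp vm v0 s) K =
   (\<Sum>i\<in>{1..g}. \<Sum>j\<in>{1..g}. up i * vp j * Wop i (Wop j s) K)
 + (\<Sum>i\<in>{1..g}. \<Sum>j\<in>{1..g}. up i * vm j * Wop i (Cop j s) K)
 + (\<Sum>i\<in>{1..g}. up i * v0 * Wop i (Gop s) K)
 + (\<Sum>i\<in>{1..g}. \<Sum>j\<in>{1..g}. um i * vp j * Cop i (Wop j s) K)
 + (\<Sum>i\<in>{1..g}. \<Sum>j\<in>{1..g}. um i * vm j * Cop i (Cop j s) K)
 + (\<Sum>i\<in>{1..g}. um i * v0 * Cop i (Gop s) K)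
 + (\<Sum>j\<in>{1..g}. u0 * vp j * Gop (Wop j s) K)
 + (\<Sum>j\<in>{1..g}. u0 * vm j * Gop (Cop j s) K)
 + u0 * v0 * Gop (Gop s) K"
proof -
  have "Xop g up um u0 (Xop g vp vm v0 s) K = (\<Sum>i\<in>{1..g}. up i * Wop i (Xop g vp vm v0 s) K)
     + (\<Sum>i\<in>{1..g}. um i * Cop i (Xop g vp vm v0 s) K) + u0 * Gop (Xop g vp vm v0 s) K"
    by (simp add: Xop_def[of g up um u0])
  then show ?thesis
    unfolding Wop_Xop Cop_Xop Gop_Xop
    by (simp add: sum_distrib_left distrib_left sum.distrib mult.assoc)
qed

lemma sum_if_delta_mult: "finite A \<Longrightarrow> (\<Sum>i\<in>A. \<Sum>j\<in>A. a i * b j * (if i = j then c else 0)) = (\<Sum>i\<in>A. a i * b i * (c::'a::comm_ring))"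
proof -
  assume "finite A"
  then have "\<And>i. i \<in> A \<Longrightarrow> (\<Sum>j\<in>A. a i * b j * (if i = j then c else 0)) = a i * b i * c"
    by (simp add: if_distrib[of "\<lambda>x. _ * x"] sum.delta sum.delta' cong: if_cong)
  then show ?thesis by (rule sum.cong[OF refl])
qed

lemma sum_if_delta_mult': "finite A \<Longrightarrow> (\<Sum>i\<in>A. \<Sum>j\<in>A. a i * b j * (if j = i then c else 0)) = (\<Sum>i\<in>A. a i * b i * (c::'a::comm_ring))"
proof -
  assume "finite A"
  then have "\<And>i. i \<in> A \<Longrightarrow> (\<Sum>j\<in>A. a i * b j * (if j = i then c else 0)) = a i * b i * c"
    by (simp add: if_distrib[of "\<lambda>x. _ * x"] sum.delta sum.delta' cong: if_cong)
  then show ?thesis by (rule sum.cong[OF refl])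
qed

lemma XX:
  assumes fs: "\<And>K. infinite K \<Longrightarrow> s K = 0"
  shows "Xop g up um u0 (Xop g vp vm v0 s) K + Xop g vp vm v0 (Xop g up um u0 s) K
     = 2 * Bf g up um u0 vp vm v0 * (s K :: 'a::field)"
proof -
  let ?A = "{1..g}"
  have p1: "(\<Sum>i\<in>?A. \<Sum>j\<in>?A. up i * vp j * Wop i (Wop j s) K) + (\<Sum>i\<in>?A. \<Sum>j\<in>?A. vp i * up j * Wop i (Wop j s) K) = 0"
    by (simp only: pair2 WW) simp
  have p2: "(\<Sum>i\<in>?A. \<Sum>j\<in>?A. up i * vm j * Wop i (Cop j s) K) + (\<Sum>i\<in>?A. \<Sum>j\<in>?A. vm i * up j * Cop i (Wop j s) K) = (\<Sum>i\<in>?A. up i * vm i * (2 * s K))"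
    by (simp only: pair2 WC sum_if_delta_mult[OF finite_atLeastAtMost])
  have p3: "(\<Sum>i\<in>?A. \<Sum>j\<in>?A. um i * vp j * Cop i (Wop j s) K) + (\<Sum>i\<in>?A. \<Sum>j\<in>?A. vp i * um j * Wop i (Cop j s) K) = (\<Sum>i\<in>?A. um i * vp i * (2 * s K))"
    by (simp only: pair2 WC' sum_if_delta_mult'[OF finite_atLeastAtMost])
  have p4: "(\<Sum>i\<in>?A. \<Sum>j\<in>?A. um i * vm j * Cop i (Cop j s) K) + (\<Sum>i\<in>?A. \<Sum>j\<in>?A. vm i * um j * Cop i (Cop j s) K) = 0"
    by (simp only: pair2 CC) simp
  have p5: "(\<Sum>i\<in>?A. up i * v0 * Wop i (Gop s) K) + (\<Sum>j\<in>?A. v0 * up j * Gop (Wop j s) K) = 0"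
    unfolding pair1 using GW'[OF fs] by simp
  have p6: "(\<Sum>i\<in>?A. um i * v0 * Cop i (Gop s) K) + (\<Sum>j\<in>?A. v0 * um j * Gop (Cop j s) K) = 0"
    unfolding pair1 using GC'[OF fs] by simp
  have p7: "(\<Sum>i\<in>?A. vp i * u0 * Wop i (Gop s) K) + (\<Sum>j\<in>?A. u0 * vp j * Gop (Wop j s) K) = 0"
    unfolding pair1 using GW'[OF fs] by simp
  have p8: "(\<Sum>i\<in>?A. vm i * u0 * Cop i (Gop s) K) + (\<Sum>j\<in>?A. u0 * vm j * Gop (Cop j s) K) = 0"
    unfolding pair1 using GC'[OF fs] by simp
  have p9: "u0 * v0 * Gop (Gop s) K + v0 * u0 * Gop (Gop s) K = 2 * u0 * v0 * s K"
    by (simp add: GG)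
  have bf: "2 * Bf g up um u0 vp vm v0 * s K = (\<Sum>i\<in>?A. up i * vm i * (2 * s K)) + (\<Sum>i\<in>?A. um i * vp i * (2 * s K)) + 2 * u0 * v0 * s K"
    by (simp add: Bf_def sum.distrib[symmetric] sum_distrib_left sum_distrib_right algebra_simps)
  show ?thesis
    unfolding Xop_expand bf
    using p1 p2 p3 p4 p5 p6 p7 p8 p9 by (simp add: algebra_simps)
qed


lemma spinD: "s \<in> spin_space g \<Longrightarrow> K \<notin> Pow {1..g} \<Longrightarrow> s K = 0"
  by (simp add: spin_space_def)

lemma spin_fin: "s \<in> spin_space g \<Longrightarrow> infinite K \<Longrightarrow> s K = 0"
  by (rule spinD) (auto dest: finite_subset)

lemma wedge_sum:
  assumes "s \<in> spin_space g"
  shows "(\<Sum>J\<in>Pow {1..g}. s J * wedge_e i J K) = (Wop i s K :: 'a::field)"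
proof -
  have "(\<Sum>J\<in>Pow {1..g}. s J * wedge_e i J K) =
        (\<Sum>J\<in>Pow {1..g}. if J = K - {i} then (if i \<in> K then wsign J i * s J else 0) else 0)"
  proof (rule sum.cong[OF refl])
    fix J
    show "s J * wedge_e i J K = (if J = K - {i} then (if i \<in> K then wsign J i * s J else 0) else 0)"
    proof (cases "i \<in> J")
      case True then show ?thesis by (auto simp: wedge_e_def)
    next
      case False
      have "(K = insert i J) = (i \<in> K \<and> J = K - {i})" using False by auto
      then show ?thesis using False by (auto simp: wedge_e_def sbasis_def)
    qed
  qed
  also have "\<dots> = (if K - {i} \<in> Pow {1..g} then (if i \<in> K then wsign (K - {i}) i * s (K - {i}) else 0) else 0)"
    by (simp add: sum.delta')
  also have "\<dots> = Wop i s K"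
    using spinD[OF assms, of "K - {i}"] by (auto simp: Wop_def)
  finally show ?thesis .
qed

lemma contr_sum:
  assumes "s \<in> spin_space g"
  shows "(\<Sum>J\<in>Pow {1..g}. s J * contr_f i J K) = (Cop i s K :: 'a::field)"
proof -
  have "(\<Sum>J\<in>Pow {1..g}. s J * contr_f i J K) =
        (\<Sum>J\<in>Pow {1..g}. if J = insert i K then (if i \<notin> K then 2 * wsign K i * s J else 0) else 0)"
  proof (rule sum.cong[OF refl])
    fix J
    show "s J * contr_f i J K = (if J = insert i K then (if i \<notin> K then 2 * wsign K i * s J else 0) else 0)"
    proof (cases "i \<in> J")
      case False then show ?thesis by (auto simp: contr_f_def)
    next
      case True
      have "(K = J - {i}) = (i \<notin> K \<and> J = insert i K)" using True by auto
      moreover have "J = insert i K \<Longrightarrow> i \<notin> K \<Longrightarrow> wsign J i = wsign K i"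
        by (simp add: wsign_self_insert)
      ultimately show ?thesis using True by (auto simp: contr_f_def sbasis_def)
    qed
  qed
  also have "\<dots> = (if insert i K \<in> Pow {1..g} then (if i \<notin> K then 2 * wsign K i * s (insert i K) else 0) else 0)"
    by (simp add: sum.delta')
  also have "\<dots> = Cop i s K"
    using spinD[OF assms, of "insert i K"] by (auto simp: Cop_def)
  finally show ?thesis .
qed

lemma pg_sum:
  assumes "s \<in> spin_space g"
  shows "(\<Sum>J\<in>Pow {1..g}. s J * act_pg J K) = (Gop s K :: 'a::field)"
proof -
  have "(\<Sum>J\<in>Pow {1..g}. s J * act_pg J K) = (\<Sum>J\<in>Pow {1..g}. if J = K then (-1) ^ card K * s J else 0)"
    by (rule sum.cong[OF refl]) (auto simp: act_pg_def sbasis_def)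
  also have "\<dots> = Gop s K"
    using spinD[OF assms, of K] by (simp add: sum.delta' Gop_def)
  finally show ?thesis .
qed

lemma vact_Xop:
  assumes "s \<in> spin_space g"
  shows "vact g f v s = Xop g (\<lambda>i. pcoord g f v (g+i)) (\<lambda>i. pcoord g f v (g-i)) (pcoord g f v g) s"
proof
  fix K
  let ?P = "Pow {1..g}" and ?I = "{1..g}"
  have "vact g f v s K = (\<Sum>J\<in>?P. \<Sum>i\<in>?I. pcoord g f v (g+i) * (s J * wedge_e i J K))
     + (\<Sum>J\<in>?P. \<Sum>i\<in>?I. pcoord g f v (g-i) * (s J * contr_f i J K))
     + (\<Sum>J\<in>?P. pcoord g f v g * (s J * act_pg J K))"
    unfolding vact_def vact_basis_def
    by (simp only: distrib_left sum_distrib_left sum.distrib mult.left_commute)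
  also have "\<dots> = (\<Sum>i\<in>?I. \<Sum>J\<in>?P. pcoord g f v (g+i) * (s J * wedge_e i J K))
     + (\<Sum>i\<in>?I. \<Sum>J\<in>?P. pcoord g f v (g-i) * (s J * contr_f i J K))
     + (\<Sum>J\<in>?P. pcoord g f v g * (s J * act_pg J K))"
    by (simp only: sum.swap[where A="Pow {1..g}"])
  also have "\<dots> = (\<Sum>i\<in>{1..g}. pcoord g f v (g+i) * (\<Sum>J\<in>Pow {1..g}. s J * wedge_e i J K))
     + (\<Sum>i\<in>{1..g}. pcoord g f v (g-i) * (\<Sum>J\<in>Pow {1..g}. s J * contr_f i J K))
     + pcoord g f v g * (\<Sum>J\<in>Pow {1..g}. s J * act_pg J K)"
    by (simp only: sum_distrib_left)
  finally have "vact g f v s K = (\<Sum>i\<in>{1..g}. pcoord g f v (g+i) * (\<Sum>J\<in>Pow {1..g}. s J * wedge_e i J K))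
     + (\<Sum>i\<in>{1..g}. pcoord g f v (g-i) * (\<Sum>J\<in>Pow {1..g}. s J * contr_f i J K))
     + pcoord g f v g * (\<Sum>J\<in>Pow {1..g}. s J * act_pg J K)" .
  then show "vact g f v s K = Xop g (\<lambda>i. pcoord g f v (g+i)) (\<lambda>i. pcoord g f v (g-i)) (pcoord g f v g) s K"
    unfolding wedge_sum[OF assms] contr_sum[OF assms] pg_sum[OF assms] by (simp add: Xop_def)
qed

lemma vact_spin: "vact g f v s \<in> spin_space g"
proof -
  have "vact g f v s K = 0" if K: "K \<notin> Pow {1..g}" for K
  proof -
    have "vact_basis g f v J K = 0" if J: "J \<in> Pow {1..g}" for J
    proof -
      have w: "pcoord g f v (g+i) * wedge_e i J K = 0" if "i \<in> {1..g}" for i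
        using that J K by (auto simp: wedge_e_def sbasis_def)
      have c: "pcoord g f v (g-i) * contr_f i J K = 0" if "i \<in> {1..g}" for i
        using that J K by (auto simp: contr_f_def sbasis_def)
      have p: "pcoord g f v g * act_pg J K = 0"
        using J K by (auto simp: act_pg_def sbasis_def)
      have "(\<Sum>i\<in>{1..g}. pcoord g f v (g+i) * wedge_e i J K) = 0"
        by (rule sum.neutral) (simp add: w)
      moreover have "(\<Sum>i\<in>{1..g}. pcoord g f v (g-i) * contr_f i J K) = 0"
        by (rule sum.neutral) (simp add: c)
      ultimately show ?thesis unfolding vact_basis_def using p by simp
    qed
    then show ?thesis by (simp add: vact_def)
  qed
  then show ?thesis by (simp add: spin_space_def)
qed



definition Hp :: "(nat \<Rightarrow> 'a::field) \<Rightarrow> nat \<Rightarrow> 'a \<Rightarrow> 'a" where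
  "Hp c m x = (\<Sum>l\<in>{0..m}. c l * x ^ (m - l))"

lemma Hp_0: "Hp c 0 x = c 0" by (simp add: Hp_def)

lemma Hp_Suc: "Hp c (Suc m) x = x * Hp c m x + c (Suc m)"
proof -
  have "Hp c (Suc m) x = (\<Sum>l\<in>{0..m}. c l * x ^ (Suc m - l)) + c (Suc m)"
    by (simp add: Hp_def sum.atLeast0_atMost_Suc)
  also have "(\<Sum>l\<in>{0..m}. c l * x ^ (Suc m - l)) = x * Hp c m x"
    unfolding Hp_def sum_distrib_left
    by (rule sum.cong[OF refl]) (simp add: Suc_diff_le algebra_simps)
  finally show ?thesis .
qed

definition Qk :: "(nat \<Rightarrow> 'a::field) \<Rightarrow> nat \<Rightarrow> 'a \<Rightarrow> 'a \<Rightarrow> 'a" where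
  "Qk c n x y = (\<Sum>j\<in>{0..n}. (x*y) ^ (n - j) * (Hp c (2*j) x + Hp c (2*j) y - c (2*j)))"

lemma kernel: "(x - y) * Qk c n x y = Hp c (2*n+1) x - Hp c (2*n+1) y"
proof (induction n)
  case 0
  then show ?case by (simp add: Qk_def Hp_def algebra_simps)
next
  case (Suc n)
  have q: "Qk c (Suc n) x y = x*y * Qk c n x y + (Hp c (2*Suc n) x + Hp c (2*Suc n) y - c (2*Suc n))"
  proof -
    have "Qk c (Suc n) x y = (\<Sum>j\<in>{0..n}. (x*y) ^ (Suc n - j) * (Hp c (2*j) x + Hp c (2*j) y - c (2*j)))
        + (Hp c (2*Suc n) x + Hp c (2*Suc n) y - c (2*Suc n))"
      by (simp add: Qk_def sum.atLeast0_atMost_Suc)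
    also have "(\<Sum>j\<in>{0..n}. (x*y) ^ (Suc n - j) * (Hp c (2*j) x + Hp c (2*j) y - c (2*j))) = x*y * Qk c n x y"
      unfolding Qk_def sum_distrib_left
      by (rule sum.cong[OF refl]) (simp add: Suc_diff_le algebra_simps)
    finally show ?thesis .
  qed
  have h2: "2 * Suc n = Suc (2*n+1)" by simp
  have h3: "2 * Suc n + 1 = Suc (Suc (2*n+1))" by simp
  define A where "A = Hp c (2*n+1) x"
  define B where "B = Hp c (2*n+1) y"
  have ex: "Hp c (2*Suc n) x = x * A + c (2*Suc n)" unfolding A_def h2 Hp_Suc ..
  have ey: "Hp c (2*Suc n) y = y * B + c (2*Suc n)" unfolding B_def h2 Hp_Suc ..
  have ex3: "Hp c (2*Suc n+1) x = x * (x * A + c (2*Suc n)) + c (2*Suc n+1)"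
  proof -
    have "Hp c (2*Suc n+1) x = x * Hp c (2*Suc n) x + c (2*Suc n+1)"
      using Hp_Suc[of c "2*Suc n" x] by simp
    then show ?thesis using ex by simp
  qed
  have ey3: "Hp c (2*Suc n+1) y = y * (y * B + c (2*Suc n)) + c (2*Suc n+1)"
  proof -
    have "Hp c (2*Suc n+1) y = y * Hp c (2*Suc n) y + c (2*Suc n+1)"
      using Hp_Suc[of c "2*Suc n" y] by simp
    then show ?thesis using ey by simp
  qed
  have ih: "(x - y) * Qk c n x y = A - B" using Suc.IH A_def B_def by simp
  have "(x - y) * Qk c (Suc n) x y = x*y*((x - y) * Qk c n x y) + (x - y) * (x * A + y * B + c (2*Suc n))"
    unfolding q ex ey by (simp add: algebra_simps)
  also have "\<dots> = x*y*(A - B) + (x - y) * (x * A + y * B + c (2*Suc n))" unfolding ih ..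
  also have "\<dots> = Hp c (2*Suc n+1) x - Hp c (2*Suc n+1) y"
    unfolding ex3 ey3 by (simp add: algebra_simps)
  finally show ?case .
qed



locale hyp =
  fixes g :: nat and f :: "'a::field poly" and \<omega> :: "nat \<Rightarrow> 'a"
  assumes two: "(2::'a) \<noteq> 0" and g1: "g \<ge> 1"
    and roots: "f = (\<Prod>i\<in>{1..2*g+1}. [:- \<omega> i, 1:])"
    and dist: "inj_on \<omega> {1..2*g+1}"
begin

abbreviation "R \<equiv> {1..2*g+1}"
abbreviation "ep \<equiv> eps g \<omega>"
definition "Aa a = poly (ep a) (\<omega> a)"

lemma ep_root: "a \<in> R \<Longrightarrow> b \<in> R \<Longrightarrow> b \<noteq> a \<Longrightarrow> poly (ep a) (\<omega> b) = 0"
  unfolding eps_def poly_prod by (rule prod_zero) auto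

lemma Aa_nz: "a \<in> R \<Longrightarrow> Aa a \<noteq> 0"
  unfolding Aa_def eps_def poly_prod
  using dist by (auto simp: inj_on_def)

lemma ep_degree: "a \<in> R \<Longrightarrow> degree (ep a) = 2*g"
proof -
  assume a: "a \<in> R"
  have "degree (ep a) = (\<Sum>j\<in>R - {a}. degree [:- \<omega> j, 1:])"
    unfolding eps_def by (rule degree_prod_eq_sum_degree) auto
  also have "\<dots> = card (R - {a})" by simp
  also have "\<dots> = 2*g" using a by simp
  finally show ?thesis .
qed

lemma ep_lc: "lead_coeff (ep a) = 1"
  unfolding eps_def lead_coeff_prod by simp

lemma ep_nz: "ep a \<noteq> 0"
  using ep_lc[of a] by auto

lemma ep_top: "a \<in> R \<Longrightarrow> coeff (ep a) (2*g) = 1"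
  using ep_lc[of a] ep_degree[of a] by simp

lemma f_split: "a \<in> R \<Longrightarrow> f = ep a * [:- \<omega> a, 1:]"
  unfolding roots eps_def by (subst prod.remove[of R a]) (auto simp: mult.commute)

lemma f_degree: "degree f = 2*g+1"
proof -
  have "degree f = degree (ep 1 * [:- \<omega> 1, 1:])" using f_split[of 1] by simp
  also have "\<dots> = 2*g + 1"
    by (subst degree_mult_eq) (auto simp: ep_degree ep_nz)
  finally show ?thesis .
qed

lemma f_nz: "f \<noteq> 0" using f_degree by auto

lemma f_lc: "coeff f (2*g+1) = 1"
proof -
  have "lead_coeff f = 1" unfolding roots lead_coeff_prod by simp
  then show ?thesis using f_degree by simp
qed

lemma ccoef0: "ccoef g f 0 = 1"
  using f_lc by (simp add: ccoef_def)

lemma f_root: "a \<in> R \<Longrightarrow> poly f (\<omega> a) = 0"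
  using f_split[of a] by simp

lemma ep_mod: "a \<in> R \<Longrightarrow> (ep a * h) mod f = smult (poly h (\<omega> a)) (ep a)"
proof -
  assume a: "a \<in> R"
  have "[:- \<omega> a, 1:] dvd (h - [:poly h (\<omega> a):])"
    by (simp add: poly_eq_0_iff_dvd[symmetric])
  then have "ep a * [:- \<omega> a, 1:] dvd ep a * (h - [:poly h (\<omega> a):])"
    by (rule mult_dvd_mono[OF dvd_refl])
  moreover have "ep a * (h - [:poly h (\<omega> a):]) = ep a * h - smult (poly h (\<omega> a)) (ep a)"
    by (simp add: right_diff_distrib)
  ultimately have "f dvd (ep a * h - smult (poly h (\<omega> a)) (ep a))"
    using f_split[OF a] by simp
  then have "(ep a * h) mod f = (smult (poly h (\<omega> a)) (ep a)) mod f"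
    by (simp add: mod_eq_dvd_iff)
  also have "\<dots> = smult (poly h (\<omega> a)) (ep a)"
  proof (rule mod_poly_less)
    have "degree (smult (poly h (\<omega> a)) (ep a)) \<le> 2*g"
      using degree_smult_le[of "poly h (\<omega> a)" "ep a"] ep_degree[OF a] by simp
    then show "degree (smult (poly h (\<omega> a)) (ep a)) < degree f" using f_degree by simp
  qed
  finally show ?thesis .
qed

lemma pcoord_ep: "a \<in> R \<Longrightarrow> pcoord g f (ep a) n = poly (pbas g f (2*g - n)) (\<omega> a)"
  unfolding pcoord_def psiV_def tauV_def by (simp add: ep_mod ep_top)

lemma lagrange:
  assumes q: "degree q \<le> 2*g"
  shows "q = (\<Sum>a\<in>R. smult (poly q (\<omega> a) / Aa a) (ep a))"
proof (rule poly_eqI_degree[where A = "\<omega> ` R"])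
  fix x assume "x \<in> \<omega> ` R"
  then obtain b where b: "b \<in> R" "x = \<omega> b" by auto
  have "poly (\<Sum>a\<in>R. smult (poly q (\<omega> a) / Aa a) (ep a)) x
      = (\<Sum>a\<in>R. if a = b then poly q (\<omega> b) else 0)"
    unfolding poly_sum poly_smult
  proof (rule sum.cong[OF refl])
    fix a assume a: "a \<in> R"
    show "poly q (\<omega> a) / Aa a * poly (ep a) x = (if a = b then poly q (\<omega> b) else 0)"
      using a b Aa_nz[OF a] ep_root[OF a b(1)] by (auto simp: Aa_def)
  qed
  also have "\<dots> = poly q x" using b by simp
  finally show "poly q x = poly (\<Sum>a\<in>R. smult (poly q (\<omega> a) / Aa a) (ep a)) x" by simp
next
  have c: "card (\<omega> ` R) = 2*g+1" using dist by (simp add: card_image)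
  show "degree q < card (\<omega> ` R)" using q c by simp
  have "degree (\<Sum>a\<in>R. smult (poly q (\<omega> a) / Aa a) (ep a)) \<le> 2*g"
    by (rule degree_sum_le) (auto intro: order.trans[OF degree_smult_le] simp: ep_degree)
  then show "degree (\<Sum>a\<in>R. smult (poly q (\<omega> a) / Aa a) (ep a)) < card (\<omega> ` R)" using c by simp
qed

lemma residue:
  assumes q: "degree q \<le> 2*g"
  shows "coeff q (2*g) = (\<Sum>a\<in>R. poly q (\<omega> a) / Aa a)"
proof -
  have "coeff q (2*g) = coeff (\<Sum>a\<in>R. smult (poly q (\<omega> a) / Aa a) (ep a)) (2*g)"
    using lagrange[OF q] by simp
  also have "\<dots> = (\<Sum>a\<in>R. poly q (\<omega> a) / Aa a)"
    unfolding coeff_sum coeff_smult by (rule sum.cong[OF refl]) (simp add: ep_top)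
  finally show ?thesis .
qed

definition Lf :: "(nat \<Rightarrow> 'a) \<Rightarrow> 'a poly \<Rightarrow> 'a" where
  "Lf l q = (\<Sum>n\<in>{0..2*g}. coeff q n * l n)"

lemma lagrange_L:
  assumes q: "degree q \<le> 2*g"
  shows "Lf l q = (\<Sum>a\<in>R. poly q (\<omega> a) / Aa a * Lf l (ep a))"
proof -
  have "Lf l q = (\<Sum>n\<in>{0..2*g}. coeff (\<Sum>a\<in>R. smult (poly q (\<omega> a) / Aa a) (ep a)) n * l n)"
    unfolding Lf_def using lagrange[OF q] by simp
  also have "\<dots> = (\<Sum>n\<in>{0..2*g}. \<Sum>a\<in>R. poly q (\<omega> a) / Aa a * (coeff (ep a) n * l n))"
    unfolding coeff_sum coeff_smult sum_distrib_right by (simp add: mult.assoc)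
  also have "\<dots> = (\<Sum>a\<in>R. poly q (\<omega> a) / Aa a * Lf l (ep a))"
    unfolding Lf_def sum_distrib_left by (rule sum.swap)
  finally show ?thesis .
qed

lemma pbas_low: "m \<le> g \<Longrightarrow> pbas g f m = monom 1 m"
  by (simp add: pbas_def)

lemma pbas_high: "1 \<le> i \<Longrightarrow> pbas g f (g+i) = monom 1 (g+i)
        + (\<Sum>j\<in>{1..2*i-1}. monom (ccoef g f j) (g+i-j))
        + monom (ccoef g f (2*i) / 2) (g-i)"
  by (simp add: pbas_def Let_def)

lemma pbas_eval:
  assumes i: "1 \<le> i" "i \<le> g"
  shows "poly (pbas g f (g+i)) x = x^(g-i) * (Hp (ccoef g f) (2*i) x - ccoef g f (2*i) / 2)"
proof -
  let ?c = "ccoef g f"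
  have s: "{0..2*i} = insert 0 (insert (2*i) {1..2*i-1})" using i by auto
  have "Hp ?c (2*i) x = ?c 0 * x^(2*i) + (?c (2*i) + (\<Sum>l\<in>{1..2*i-1}. ?c l * x^(2*i-l)))"
    unfolding Hp_def s using i by (subst sum.insert; auto)+
  then have "x^(g-i) * Hp ?c (2*i) x = x^(g+i) + ?c (2*i) * x^(g-i) + (\<Sum>l\<in>{1..2*i-1}. ?c l * x^(g+i-l))"
  proof -
    assume h: "Hp ?c (2*i) x = ?c 0 * x^(2*i) + (?c (2*i) + (\<Sum>l\<in>{1..2*i-1}. ?c l * x^(2*i-l)))"
    have gi: "g - i + 2*i = g + i" using i by simp
    have e1: "x^(g-i) * x^(2*i) = x^(g+i)" by (simp only: power_add[symmetric] gi)
    have e2: "x^(g-i) * (\<Sum>l\<in>{1..2*i-1}. ?c l * x^(2*i-l)) = (\<Sum>l\<in>{1..2*i-1}. ?c l * x^(g+i-l))"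
      unfolding sum_distrib_left
    proof (rule sum.cong[OF refl])
      fix l assume "l \<in> {1..2*i-1}"
      then have "g - i + (2*i - l) = g + i - l" using i by auto
      then show "x ^ (g - i) * (?c l * x ^ (2 * i - l)) = ?c l * x ^ (g + i - l)"
        by (simp add: algebra_simps flip: power_add)
    qed
    show ?thesis unfolding h ccoef0 using e1 e2 by (simp add: algebra_simps)
  qed
  moreover have "poly (pbas g f (g+i)) x = x^(g+i) + (\<Sum>l\<in>{1..2*i-1}. ?c l * x^(g+i-l)) + ?c (2*i) / 2 * x^(g-i)"
    using i by (simp add: pbas_high poly_sum poly_monom)
  ultimately show ?thesis using two by (simp add: algebra_simps)
qed

lemma pbas_coeff:
  assumes m: "m \<le> 2*g"
  shows "coeff (pbas g f m) m = 1" "\<And>n. n > m \<Longrightarrow> coeff (pbas g f m) n = 0"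
proof -
  have "coeff (pbas g f m) m = 1 \<and> (\<forall>n>m. coeff (pbas g f m) n = 0)"
  proof (cases "m \<le> g")
    case True then show ?thesis by (simp add: pbas_low coeff_monom)
  next
    case False
    define i where "i = m - g"
    have i: "m = g + i" "1 \<le> i" "i \<le> g" using m False by (auto simp: i_def)
    have sum0: "coeff (\<Sum>j\<in>{1..2*i-1}. monom (ccoef g f j) (g+i-j)) n = 0" if "n \<ge> g + i" for n
      unfolding coeff_sum using that i by (intro sum.neutral) (auto simp: coeff_monom)
    show ?thesis unfolding i(1) pbas_high[OF i(2)] using i sum0 by (auto simp: coeff_monom)
  qed
  then show "coeff (pbas g f m) m = 1" "\<And>n. n > m \<Longrightarrow> coeff (pbas g f m) n = 0" by auto
qed

lemma pbas_degree: "m \<le> 2*g \<Longrightarrow> degree (pbas g f m) \<le> m"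
  by (rule degree_le) (auto intro: pbas_coeff(2))

end


lemma vact_scale: "vact g f v (\<lambda>K. c * t K) = (\<lambda>K. c * vact g f v t K)"
  by (simp add: vact_def sum_distrib_left mult.assoc)

lemma vact_add: "vact g f v (\<lambda>K. t K + u K) = (\<lambda>K. vact g f v t K + vact g f v u K)"
  by (simp add: vact_def sum.distrib distrib_right)

lemma vact_sum: "vact g f v (\<lambda>K. \<Sum>x\<in>X. F x K) = (\<lambda>K. \<Sum>x\<in>X. vact g f v (F x) K)"
  by (simp add: vact_def sum_distrib_right) (rule ext, rule sum.swap)

lemma vact_list_scale: "vact_list g f vs (\<lambda>K. c * t K) = (\<lambda>K. c * vact_list g f vs t K)"
  by (induction vs) (simp_all add: vact_scale)

lemma vact_list_sum: "vact_list g f vs (\<lambda>K. \<Sum>x\<in>X. F x K) = (\<lambda>K. \<Sum>x\<in>X. vact_list g f vs (F x) K)"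
  by (induction vs) (simp_all add: vact_sum)

lemma vact_list_add: "vact_list g f vs (\<lambda>K. t K + u K) = (\<lambda>K. vact_list g f vs t K + vact_list g f vs u K)"
  by (induction vs) (simp_all add: vact_add)

lemma vact_list_spin: "s \<in> spin_space g \<Longrightarrow> vact_list g f vs s \<in> spin_space g"
  by (cases vs) (simp_all add: vact_spin)

lemma vact_list_append: "vact_list g f (xs @ ys) s = vact_list g f xs (vact_list g f ys s)"
  by (induction xs) simp_all

definition symd :: "nat set \<Rightarrow> nat \<Rightarrow> nat set" where
  "symd L a = (if a \<in> L then L - {a} else insert a L)"

lemma sorted_insert_min:
  assumes "finite A" "\<forall>x\<in>A. b < x"
  shows "sorted_list_of_set (insert b A) = b # sorted_list_of_set A"
proof -
  have m: "Min (insert b A) = b"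
    by (rule Min_eqI) (use assms in \<open>auto simp: less_imp_le\<close>)
  have "insert b A - {b} = A" using assms by auto
  then show ?thesis using sorted_list_of_set_nonempty[of "insert b A"] assms m by simp
qed

lemma sorted_insert_max:
  assumes "finite A" "\<forall>x\<in>A. x < b"
  shows "sorted_list_of_set (insert b A) = sorted_list_of_set A @ [b]"
proof (rule sorted_distinct_set_unique)
  show "sorted (sorted_list_of_set (insert b A))" by (rule sorted_sorted_list_of_set)
  show "distinct (sorted_list_of_set (insert b A))" by (rule distinct_sorted_list_of_set)
  show "sorted (sorted_list_of_set A @ [b])"
    using assms by (auto simp: sorted_append less_imp_le)
  show "distinct (sorted_list_of_set A @ [b])" using assms by auto
  show "set (sorted_list_of_set (insert b A)) = set (sorted_list_of_set A @ [b])"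
    using assms by (simp only: set_sorted_list_of_set finite_insert set_append) auto
qed

context hyp begin

definition "up a i = pcoord g f (ep a) (g+i)"
definition "um a i = pcoord g f (ep a) (g-i)"
definition "u0 a = pcoord g f (ep a) g"
definition "beta a b = Bf g (up a) (um a) (u0 a) (up b) (um b) (u0 b)"

lemma up_val: "a \<in> R \<Longrightarrow> i \<le> g \<Longrightarrow> up a i = (\<omega> a) ^ (g - i)"
  by (simp add: up_def pcoord_ep pbas_low poly_monom)

lemma um_val: "a \<in> R \<Longrightarrow> i \<le> g \<Longrightarrow> um a i = poly (pbas g f (g+i)) (\<omega> a)"
proof -
  assume "a \<in> R" "i \<le> g"
  moreover have "2*g - (g - i) = g + i" using \<open>i \<le> g\<close> by simp
  ultimately show ?thesis by (simp add: um_def pcoord_ep)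
qed

lemma u0_val: "a \<in> R \<Longrightarrow> u0 a = (\<omega> a) ^ g"
  by (simp add: u0_def pcoord_ep pbas_low poly_monom)

lemma poly_f_Hp: "poly f x = Hp (ccoef g f) (2*g+1) x"
proof -
  let ?N = "2*g+1"
  have "poly f x = (\<Sum>i\<in>{0..?N}. coeff f i * x ^ i)"
    by (simp add: poly_altdef f_degree atMost_atLeast0)
  also have "\<dots> = (\<Sum>i\<in>{0..?N}. coeff f (?N - i) * x ^ (?N - i))"
    by (subst sum.atLeastAtMost_rev) simp
  also have "\<dots> = Hp (ccoef g f) ?N x" by (simp add: Hp_def ccoef_def)
  finally show ?thesis .
qed

lemma beta_Q: "a \<in> R \<Longrightarrow> b \<in> R \<Longrightarrow> beta a b = Qk (ccoef g f) g (\<omega> a) (\<omega> b)"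
proof -
  assume a: "a \<in> R" and b: "b \<in> R"
  let ?c = "ccoef g f" and ?x = "\<omega> a" and ?y = "\<omega> b"
  have s: "{0..g} = insert 0 {1..g}" by auto
  have "Qk ?c g ?x ?y = (?x * ?y)^g + (\<Sum>j\<in>{1..g}. (?x*?y) ^ (g - j) * (Hp ?c (2*j) ?x + Hp ?c (2*j) ?y - ?c (2*j)))"
    unfolding Qk_def s by (simp add: Hp_0 ccoef0)
  also have "(\<Sum>j\<in>{1..g}. (?x*?y) ^ (g - j) * (Hp ?c (2*j) ?x + Hp ?c (2*j) ?y - ?c (2*j)))
     = (\<Sum>i\<in>{1..g}. up a i * um b i + um a i * up b i)"
  proof (rule sum.cong[OF refl])
    fix i assume i: "i \<in> {1..g}"
    have h: "?c (2*i) = ?c (2*i) / 2 + ?c (2*i) / 2" using two by (simp add: field_simps)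
    show "(?x*?y) ^ (g - i) * (Hp ?c (2*i) ?x + Hp ?c (2*i) ?y - ?c (2*i)) = up a i * um b i + um a i * up b i"
      using i a b
      apply (simp add: up_val um_val pbas_eval power_mult_distrib)
      apply (subst h)
      apply (simp add: algebra_simps)
      done
  qed
  finally show ?thesis using a b by (simp add: beta_def Bf_def u0_val power_mult_distrib)
qed

lemma beta_zero: "a \<in> R \<Longrightarrow> b \<in> R \<Longrightarrow> a \<noteq> b \<Longrightarrow> beta a b = 0"
proof -
  assume a: "a \<in> R" and b: "b \<in> R" and ab: "a \<noteq> b"
  have "(\<omega> a - \<omega> b) * beta a b = poly f (\<omega> a) - poly f (\<omega> b)"
    using kernel[of "\<omega> a" "\<omega> b" "ccoef g f" g] by (simp add: beta_Q[OF a b] poly_f_Hp)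
  also have "\<dots> = 0" using f_root[OF a] f_root[OF b] by simp
  finally show ?thesis using dist a b ab by (auto simp: inj_on_def)
qed

definition "T a s = vact g f (ep a) s"

lemma T_spin: "T a s \<in> spin_space g" by (simp add: T_def vact_spin)

lemma T_Xop: "s \<in> spin_space g \<Longrightarrow> T a s = Xop g (up a) (um a) (u0 a) s"
  unfolding T_def up_def um_def u0_def by (rule vact_Xop)

lemma TT: "s \<in> spin_space g \<Longrightarrow> T a (T b s) K + T b (T a s) K = 2 * beta a b * s K"
proof -
  assume s: "s \<in> spin_space g"
  have "T a (T b s) K + T b (T a s) K
     = Xop g (up a) (um a) (u0 a) (Xop g (up b) (um b) (u0 b) s) K + Xop g (up b) (um b) (u0 b) (Xop g (up a) (um a) (u0 a) s) K"
  proof -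
    have e1: "T b s = Xop g (up b) (um b) (u0 b) s" "T a s = Xop g (up a) (um a) (u0 a) s"
      by (rule T_Xop[OF s])+
    have e2: "T a (T b s) = Xop g (up a) (um a) (u0 a) (T b s)" "T b (T a s) = Xop g (up b) (um b) (u0 b) (T a s)"
      by (rule T_Xop[OF T_spin])+
    show ?thesis using e2 unfolding e1 by simp
  qed
  also have "\<dots> = 2 * beta a b * s K"
    unfolding beta_def by (rule XX) (rule spin_fin[OF s])
  finally show ?thesis .
qed

lemma T_sq: "s \<in> spin_space g \<Longrightarrow> T a (T a s) = (\<lambda>K. beta a a * s K)"
proof
  fix K assume s: "s \<in> spin_space g"
  have "2 * T a (T a s) K = T a (T a s) K + T a (T a s) K" by (rule mult_2)
  also have "\<dots> = 2 * (beta a a * s K)" using TT[OF s, of a a K] by (simp only: mult.assoc)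
  finally have "2 * T a (T a s) K = 2 * (beta a a * s K)" .
  then show "T a (T a s) K = beta a a * s K" using two by simp
qed

lemma T_anti: "a \<in> R \<Longrightarrow> b \<in> R \<Longrightarrow> a \<noteq> b \<Longrightarrow> s \<in> spin_space g \<Longrightarrow> T a (T b s) = (\<lambda>K. - T b (T a s) K)"
proof
  fix K assume "a \<in> R" "b \<in> R" "a \<noteq> b" and s: "s \<in> spin_space g"
  then have "T a (T b s) K + T b (T a s) K = 0" using TT[OF s, of a b K] beta_zero by simp
  then show "T a (T b s) K = - T b (T a s) K" by (simp add: eq_neg_iff_add_eq_0)
qed

lemma T_scale: "T a (\<lambda>K. c * t K) = (\<lambda>K. c * T a t K)"
  by (simp add: T_def vact_scale)

definition "TL L s = vact_list g f (map ep (sorted_list_of_set L)) s"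

lemma TL_empty[simp]: "TL {} s = s" by (simp add: TL_def)

lemma TL_single: "TL {a} s = T a s" by (simp add: TL_def T_def)

lemma TL_insert_min:
  assumes "finite A" "\<forall>x\<in>A. b < x" shows "TL (insert b A) s = T b (TL A s)"
  unfolding TL_def T_def sorted_insert_min[OF assms] by simp

lemma TL_spin: "s \<in> spin_space g \<Longrightarrow> TL L s \<in> spin_space g"
  by (simp add: TL_def vact_list_spin)

lemma TL_scale: "TL L (\<lambda>K. c * t K) = (\<lambda>K. c * TL L t K)"
  by (simp add: TL_def vact_list_scale)

lemma TL_sum: "TL L (\<lambda>K. \<Sum>x\<in>X. F x K) = (\<lambda>K. \<Sum>x\<in>X. TL L (F x) K)"
  by (simp add: TL_def vact_list_sum)

lemma lemmaL:
  assumes "finite L" "L \<subseteq> R" "a \<in> R" "s \<in> spin_space g"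
  shows "\<exists>c. T a (TL L s) = (\<lambda>K. c * TL (symd L a) s K)"
  using assms(1,2)
proof (induction L rule: finite_linorder_min_induct)
  case empty
  then show ?case by (intro exI[of _ 1]) (simp add: symd_def TL_single)
next
  case (insert b A)
  have bA: "b \<notin> A" using insert.hyps(2) by auto
  have b: "b \<in> R" using insert.prems by auto
  consider "a < b" | "a = b" | "b < a" by linarith
  then show ?case
  proof cases
    case 1
    then have "symd (insert b A) a = insert a (insert b A)" using insert.hyps(2) by (auto simp: symd_def)
    moreover have "TL (insert a (insert b A)) s = T a (TL (insert b A) s)"
      using 1 insert.hyps by (intro TL_insert_min) auto
    ultimately show ?thesis by (intro exI[of _ 1]) simp
  next
    case 2
    then have "symd (insert b A) a = A" using bA by (auto simp: symd_def)
    moreover have "T a (TL (insert b A) s) = (\<lambda>K. beta a a * TL A s K)"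
      using 2 TL_insert_min[OF insert.hyps(1,2)] T_sq[OF TL_spin[OF assms(4)]] by simp
    ultimately show ?thesis by auto
  next
    case 3
    obtain c where c: "T a (TL A s) = (\<lambda>K. c * TL (symd A a) s K)"
      using insert.IH insert.prems by auto
    have sy: "symd (insert b A) a = insert b (symd A a)" using 3 bA by (auto simp: symd_def)
    have fin: "finite (symd A a)" using insert.hyps(1) by (simp add: symd_def)
    have lt: "\<forall>x\<in>symd A a. b < x" using 3 insert.hyps(2) by (auto simp: symd_def)
    have "T a (TL (insert b A) s) = T a (T b (TL A s))"
      using TL_insert_min[OF insert.hyps(1,2)] by simp
    also have "\<dots> = (\<lambda>K. - T b (T a (TL A s)) K)"
      using T_anti[OF assms(3) b _ TL_spin[OF assms(4)]] 3 by simp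
    also have "\<dots> = (\<lambda>K. (- c) * TL (symd (insert b A) a) s K)"
      unfolding c T_scale sy TL_insert_min[OF fin lt] by simp
    finally show ?thesis by blast
  qed
qed

lemma symd_symd: "b \<notin> A \<Longrightarrow> symd (symd A a) b = symd (insert b A) a"
  by (auto simp: symd_def)

lemma symd_sub: "L \<subseteq> R \<Longrightarrow> a \<in> R \<Longrightarrow> symd L a \<subseteq> R"
  by (auto simp: symd_def)

lemma lemmaR:
  assumes "finite L" "L \<subseteq> R" "a \<in> R" "s \<in> spin_space g"
  shows "\<exists>c. TL L (T a s) = (\<lambda>K. c * TL (symd L a) s K)"
  using assms(1,2)
proof (induction L rule: finite_linorder_min_induct)
  case empty
  then show ?case by (intro exI[of _ 1]) (simp add: symd_def TL_single)
next
  case (insert b A)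
  have bA: "b \<notin> A" using insert.hyps(2) by auto
  have b: "b \<in> R" using insert.prems by auto
  obtain c where c: "TL A (T a s) = (\<lambda>K. c * TL (symd A a) s K)"
    using insert.IH insert.prems by auto
  have fin: "finite (symd A a)" using insert.hyps(1) by (simp add: symd_def)
  obtain d where d: "T b (TL (symd A a) s) = (\<lambda>K. d * TL (symd (symd A a) b) s K)"
    using lemmaL[OF fin symd_sub[OF _ assms(3)] b assms(4)] insert.prems by auto
  have "TL (insert b A) (T a s) = T b (TL A (T a s))"
    using TL_insert_min[OF insert.hyps(1,2)] by simp
  also have "\<dots> = (\<lambda>K. (c * d) * TL (symd (insert b A) a) s K)"
    unfolding c T_scale d symd_symd[OF bA] by (simp add: mult.assoc)
  finally show ?case by blast
qed

end


definition sc :: "'a::field \<Rightarrow> (nat set \<Rightarrow> 'a) \<Rightarrow> (nat set \<Rightarrow> 'a)" where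
  "sc c s = (\<lambda>K. c * s K)"

interpretation fv: vector_space "sc :: 'a::field \<Rightarrow> _"
  by unfold_locales (auto simp: sc_def fun_eq_iff algebra_simps)

lemma sum_sc: "(\<lambda>K. \<Sum>x\<in>X. c x * F x K) = (\<Sum>x\<in>X. sc (c x) (F x))"
  by (rule ext) (simp add: fun_sum_apply sc_def)

lemma span_lincomb:
  assumes "finite X" "\<And>x. x \<in> X \<Longrightarrow> c x = 0 \<or> F x \<in> fv.span S"
  shows "(\<lambda>K. \<Sum>x\<in>X. c x * F x K) \<in> fv.span S"
  unfolding sum_sc
proof (rule fv.span_sum)
  fix x assume x: "x \<in> X"
  show "sc (c x) (F x) \<in> fv.span S"
  proof (cases "c x = 0")
    case True
    then have "sc (c x) (F x) = 0" by (simp add: sc_def zero_fun_def)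
    then show ?thesis by (simp only: fv.span_zero)
  next
    case False
    then show ?thesis using assms(2)[OF x] by (simp add: fv.span_scale)
  qed
qed

lemma span_lincomb2:
  assumes "finite X" "\<And>x. x \<in> X \<Longrightarrow> c x = 0 \<or> F x \<in> fv.span S" "u \<in> fv.span S"
  shows "(\<lambda>K. e * u K + (\<Sum>x\<in>X. c x * F x K)) \<in> fv.span S"
proof -
  have "(\<lambda>K. e * u K + (\<Sum>x\<in>X. c x * F x K)) = sc e u + (\<lambda>K. \<Sum>x\<in>X. c x * F x K)"
    by (simp add: sc_def fun_eq_iff)
  then show ?thesis using fv.span_add[OF fv.span_scale[OF assms(3)] span_lincomb[OF assms(1,2)]] by simp
qed

lemma Xop_lin: "(\<Sum>a\<in>X. c a * Xop g (U a) (M a) (Z a) s K)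
   = Xop g (\<lambda>i. \<Sum>a\<in>X. c a * U a i) (\<lambda>i. \<Sum>a\<in>X. c a * M a i) (\<Sum>a\<in>X. c a * Z a) s K"
proof -
  have "(\<Sum>a\<in>X. c a * Xop g (U a) (M a) (Z a) s K)
     = (\<Sum>a\<in>X. \<Sum>i\<in>{1..g}. c a * U a i * Wop i s K) + (\<Sum>a\<in>X. \<Sum>i\<in>{1..g}. c a * M a i * Cop i s K)
       + (\<Sum>a\<in>X. c a * Z a) * Gop s K"
    by (simp add: Xop_def distrib_left sum.distrib sum_distrib_left sum_distrib_right mult.assoc)
  also have "\<dots> = (\<Sum>i\<in>{1..g}. \<Sum>a\<in>X. c a * U a i * Wop i s K) + (\<Sum>i\<in>{1..g}. \<Sum>a\<in>X. c a * M a i * Cop i s K)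
       + (\<Sum>a\<in>X. c a * Z a) * Gop s K"
    by (simp only: sum.swap[where A = X])
  also have "\<dots> = Xop g (\<lambda>i. \<Sum>a\<in>X. c a * U a i) (\<lambda>i. \<Sum>a\<in>X. c a * M a i) (\<Sum>a\<in>X. c a * Z a) s K"
    by (simp add: Xop_def sum_distrib_right)
  finally show ?thesis .
qed

lemma one_spin: "one_S \<in> spin_space g"
  by (simp add: spin_space_def one_S_def sbasis_def)

context hyp begin

abbreviation "V I \<equiv> TL I one_S"

lemma Wop_one: "Wop i one_S K = (if K = {i} then 1 else 0)"
proof -
  have "(i \<in> K \<and> K - {i} = {}) = (K = {i})" by auto
  then show ?thesis by (auto simp: Wop_def one_S_def sbasis_def wsign_def)
qed

lemma Cop_one: "Cop i one_S K = 0"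
  by (simp add: Cop_def one_S_def sbasis_def)

lemma Gop_one: "Gop one_S K = (if K = {} then 1 else 0)"
  by (simp add: Gop_def one_S_def sbasis_def)

lemma T_one: "a \<in> R \<Longrightarrow> T a one_S K =
   (\<Sum>i\<in>{1..g}. (\<omega> a) ^ (g - i) * (if K = {i} then 1 else 0)) + (\<omega> a) ^ g * (if K = {} then 1 else 0)"
  unfolding T_Xop[OF one_spin] Xop_def Wop_one Cop_one Gop_one
  by (simp add: u0_val up_val)

lemma moment:
  assumes h: "degree h \<le> g" and m: "m \<le> g"
  shows "(\<Sum>a\<in>R. poly h (\<omega> a) / Aa a * (\<omega> a) ^ m) = coeff h (2*g - m)"
proof -
  let ?q = "monom 1 m * h"
  have dq: "degree ?q \<le> 2*g"
    using degree_mult_le[of "monom 1 m" h] h m by (simp add: degree_monom_eq)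
  have "coeff ?q (2*g) = coeff h (2*g - m)" using m by (simp add: coeff_monom_mult)
  moreover have "coeff ?q (2*g) = (\<Sum>a\<in>R. poly ?q (\<omega> a) / Aa a)" by (rule residue[OF dq])
  moreover have "(\<Sum>a\<in>R. poly ?q (\<omega> a) / Aa a) = (\<Sum>a\<in>R. poly h (\<omega> a) / Aa a * (\<omega> a) ^ m)"
    by (simp add: poly_monom mult.commute)
  ultimately show ?thesis by simp
qed

lemma relation_one:
  assumes h: "degree h \<le> g"
  shows "(\<lambda>K. \<Sum>a\<in>R. poly h (\<omega> a) / Aa a * T a one_S K) = (\<lambda>K. coeff h g * one_S K)"
proof
  fix K
  let ?c = "\<lambda>a. poly h (\<omega> a) / Aa a"
  have "(\<Sum>a\<in>R. ?c a * T a one_S K)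
     = (\<Sum>a\<in>R. \<Sum>i\<in>{1..g}. ?c a * (\<omega> a) ^ (g - i) * (if K = {i} then 1 else 0))
       + (\<Sum>a\<in>R. ?c a * (\<omega> a) ^ g) * (if K = {} then 1 else 0)"
    by (simp add: T_one distrib_left sum.distrib sum_distrib_left sum_distrib_right mult.assoc)
  also have "\<dots> = (\<Sum>i\<in>{1..g}. (\<Sum>a\<in>R. ?c a * (\<omega> a) ^ (g - i)) * (if K = {i} then 1 else 0))
       + (\<Sum>a\<in>R. ?c a * (\<omega> a) ^ g) * (if K = {} then 1 else 0)"
    by (simp only: sum.swap[where A = R] sum_distrib_right)
  also have "(\<Sum>i\<in>{1..g}. (\<Sum>a\<in>R. ?c a * (\<omega> a) ^ (g - i)) * (if K = {i} then 1 else 0)) = 0"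
  proof (rule sum.neutral, rule ballI)
    fix i assume i: "i \<in> {1..g}"
    have "(\<Sum>a\<in>R. ?c a * (\<omega> a) ^ (g - i)) = coeff h (2*g - (g - i))"
      by (rule moment[OF h]) simp
    also have "\<dots> = 0" using i h by (intro coeff_eq_0) auto
    finally show "(\<Sum>a\<in>R. ?c a * (\<omega> a) ^ (g - i)) * (if K = {i} then 1 else 0) = 0" by simp
  qed
  also have "(\<Sum>a\<in>R. ?c a * (\<omega> a) ^ g) = coeff h g"
    using moment[OF h, of g] by simp
  finally show "(\<Sum>a\<in>R. ?c a * T a one_S K) = coeff h g * one_S K"
    by (simp add: one_S_def sbasis_def)
qed

lemma relation_TL:
  assumes h: "degree h \<le> g"
  shows "(\<lambda>K. coeff h g * V J K) = (\<lambda>K. \<Sum>a\<in>R. poly h (\<omega> a) / Aa a * TL J (T a one_S) K)"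
proof -
  have "(\<lambda>K. coeff h g * V J K) = TL J (\<lambda>K. coeff h g * one_S K)" by (simp add: TL_scale)
  also have "\<dots> = TL J (\<lambda>K. \<Sum>a\<in>R. poly h (\<omega> a) / Aa a * T a one_S K)"
    unfolding relation_one[OF h] ..
  also have "\<dots> = (\<lambda>K. \<Sum>a\<in>R. poly h (\<omega> a) / Aa a * TL J (T a one_S) K)"
    by (simp only: TL_sum TL_scale)
  finally show ?thesis .
qed

end


context hyp begin

definition "Sg = {J. J \<subseteq> R \<and> card J = g}"

lemma linprod:
  assumes Z: "Z \<subseteq> R"
  shows "degree (\<Prod>z\<in>Z. [:- \<omega> z, 1:]) = card Z"
    "lead_coeff (\<Prod>z\<in>Z. [:- \<omega> z, 1:]) = 1"
    "\<And>a. a \<in> Z \<Longrightarrow> poly (\<Prod>z\<in>Z. [:- \<omega> z, 1:]) (\<omega> a) = 0"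
    "\<And>a. a \<in> R \<Longrightarrow> a \<notin> Z \<Longrightarrow> poly (\<Prod>z\<in>Z. [:- \<omega> z, 1:]) (\<omega> a) \<noteq> 0"
proof -
  have fin: "finite Z" using Z finite_subset by blast
  show "degree (\<Prod>z\<in>Z. [:- \<omega> z, 1:]) = card Z"
    by (subst degree_prod_eq_sum_degree) auto
  show "lead_coeff (\<Prod>z\<in>Z. [:- \<omega> z, 1:]) = 1"
    by (simp add: lead_coeff_prod)
  show "\<And>a. a \<in> Z \<Longrightarrow> poly (\<Prod>z\<in>Z. [:- \<omega> z, 1:]) (\<omega> a) = 0"
    unfolding poly_prod using fin by (intro prod_zero) auto
  show "\<And>a. a \<in> R \<Longrightarrow> a \<notin> Z \<Longrightarrow> poly (\<Prod>z\<in>Z. [:- \<omega> z, 1:]) (\<omega> a) \<noteq> 0"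
  proof -
    fix a assume a: "a \<in> R" "a \<notin> Z"
    have "\<omega> a - \<omega> z \<noteq> 0" if z: "z \<in> Z" for z
    proof
      assume "\<omega> a - \<omega> z = 0"
      then have "a = z" using inj_onD[OF dist _ a(1)] z Z by auto
      then show False using a z by simp
    qed
    then show "poly (\<Prod>z\<in>Z. [:- \<omega> z, 1:]) (\<omega> a) \<noteq> 0"
      unfolding poly_prod using fin by simp
  qed
qed

lemma getd:
  assumes "I \<subseteq> R"
  shows "\<exists>d. \<forall>a\<in>R. TL I (T a one_S) = (\<lambda>K. d a * V (symd I a) K)"
proof -
  have fin: "finite I" using assms finite_subset by blast
  have "\<forall>a\<in>R. \<exists>c. TL I (T a one_S) = (\<lambda>K. c * V (symd I a) K)"
    using lemmaR[OF fin assms _ one_spin] by blast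
  then show ?thesis by (rule bchoice)
qed

lemma up_span: "\<forall>I. I \<subseteq> R \<longrightarrow> card I + n = g \<longrightarrow> V I \<in> fv.span (V ` Sg)"
proof (induction n)
  case 0
  then show ?case by (auto simp: Sg_def intro: fv.span_base)
next
  case (Suc n)
  show ?case
  proof (intro allI impI)
    fix I assume I: "I \<subseteq> R" and cI: "card I + Suc n = g"
    have fin: "finite I" using I finite_subset by blast
    define h where "h = (\<Prod>m\<in>I. [:- \<omega> m, 1:]) * monom 1 (Suc n)"
    have p0: "(\<Prod>m\<in>I. [:- \<omega> m, 1:]) \<noteq> 0" using linprod(2)[OF I] by auto
    have dh: "degree h = g" unfolding h_def
      by (subst degree_mult_eq) (use p0 linprod(1)[OF I] cI in \<open>auto simp: degree_monom_eq\<close>)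
    have lh: "coeff h g = 1"
    proof -
      have "lead_coeff h = 1" unfolding h_def lead_coeff_mult using linprod(2)[OF I] by (simp add: lead_coeff_monom degree_monom_eq)
      then show ?thesis using dh by simp
    qed
    obtain d where d: "\<forall>a\<in>R. TL I (T a one_S) = (\<lambda>K. d a * V (symd I a) K)"
      using getd[OF I] by blast
    have "V I = (\<lambda>K. coeff h g * V I K)" using lh by simp
    also have "\<dots> = (\<lambda>K. \<Sum>a\<in>R. poly h (\<omega> a) / Aa a * TL I (T a one_S) K)"
      by (rule relation_TL) (simp add: dh)
    also have "\<dots> = (\<lambda>K. \<Sum>a\<in>R. (poly h (\<omega> a) / Aa a * d a) * V (symd I a) K)"
      using d by (simp add: mult.assoc)
    also have "\<dots> \<in> fv.span (V ` Sg)"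
    proof (rule span_lincomb)
      fix a assume a: "a \<in> R"
      show "poly h (\<omega> a) / Aa a * d a = 0 \<or> V (symd I a) \<in> fv.span (V ` Sg)"
      proof (cases "a \<in> I")
        case True
        then have "poly h (\<omega> a) = 0" unfolding h_def using linprod(3)[OF I True] by simp
        then show ?thesis by simp
      next
        case False
        then have "symd I a = insert a I" by (simp add: symd_def)
        moreover have "card (insert a I) + n = g" using False fin cI by simp
        moreover have "insert a I \<subseteq> R" using I a by auto
        ultimately show ?thesis using Suc.IH by auto
      qed
    qed simp
    finally show "V I \<in> fv.span (V ` Sg)" .
  qed
qed

lemma TL_max:
  assumes "finite A" "\<forall>x\<in>A. x < b"
  shows "TL (insert b A) s = TL A (T b s)"
  unfolding TL_def T_def sorted_insert_max[OF assms] by (simp add: vact_list_append)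

lemma down_span: "I \<subseteq> R \<Longrightarrow> g + 1 \<le> card I \<Longrightarrow> V I \<in> fv.span (V ` Sg)"
proof (induction "card I" arbitrary: I rule: less_induct)
  case less
  have I: "I \<subseteq> R" and cI: "g + 1 \<le> card I" by fact+
  have fin: "finite I" using I finite_subset by blast
  have ne: "I \<noteq> {}" using cI g1 by auto
  define i0 where "i0 = Max I"
  define I' where "I' = I - {i0}"
  have i0: "i0 \<in> I" using fin ne by (simp add: i0_def)
  have II: "I = insert i0 I'" using i0 by (auto simp: I'_def)
  have lt: "\<forall>x\<in>I'. x < i0" using fin by (auto simp: I'_def i0_def le_neq_trans)
  have fin': "finite I'" using fin by (simp add: I'_def)
  have I'R: "I' \<subseteq> R" using I by (auto simp: I'_def)
  have cI': "card I' = card I - 1" using i0 fin by (simp add: I'_def)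
  have i0R: "i0 \<in> R" using i0 I by auto
  have VI: "V I = TL I' (T i0 one_S)" using TL_max[OF fin' lt] II by simp
  define h where "h = (\<Prod>z\<in>R - I. [:- \<omega> z, 1:])"
  have RI: "R - I \<subseteq> R" by auto
  have dh: "degree h \<le> g"
  proof -
    have "card (R - I) = card R - card I" using I by (simp add: card_Diff_subset fin)
    then show ?thesis unfolding h_def linprod(1)[OF RI] using cI by simp
  qed
  define c where "c a = poly h (\<omega> a) / Aa a" for a
  have c0: "c i0 \<noteq> 0" unfolding c_def h_def using linprod(4)[OF RI i0R] i0 Aa_nz[OF i0R] by simp
  obtain d where d: "\<forall>a\<in>R. TL I' (T a one_S) = (\<lambda>K. d a * V (symd I' a) K)"
    using getd[OF I'R] by blast
  have rel: "(\<lambda>K. coeff h g * V I' K) = (\<lambda>K. \<Sum>a\<in>R. c a * TL I' (T a one_S) K)"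
    unfolding c_def by (rule relation_TL[OF dh])
  have "V I = (\<lambda>K. (coeff h g / c i0) * V I' K + (\<Sum>a\<in>R - {i0}. (- (c a * d a) / c i0) * V (symd I' a) K))"
  proof
    fix K
    have "coeff h g * V I' K = (\<Sum>a\<in>R. c a * TL I' (T a one_S) K)" using fun_cong[OF rel, of K] by simp
    also have "\<dots> = c i0 * V I K + (\<Sum>a\<in>R - {i0}. c a * TL I' (T a one_S) K)"
      by (subst sum.remove[OF _ i0R]) (simp_all add: VI)
    also have "(\<Sum>a\<in>R - {i0}. c a * TL I' (T a one_S) K) = (\<Sum>a\<in>R - {i0}. c a * d a * V (symd I' a) K)"
      using d by (intro sum.cong) (auto simp: mult.assoc)
    finally have e: "coeff h g * V I' K = c i0 * V I K + (\<Sum>a\<in>R - {i0}. c a * d a * V (symd I' a) K)" .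
    have "V I K = (1 / c i0) * (c i0 * V I K)" using c0 by simp
    also have "\<dots> = (1 / c i0) * (coeff h g * V I' K - (\<Sum>a\<in>R - {i0}. c a * d a * V (symd I' a) K))"
      using e by (simp add: algebra_simps)
    also have "\<dots> = (coeff h g / c i0) * V I' K - (\<Sum>a\<in>R - {i0}. c a * d a * V (symd I' a) K) / c i0"
      by (simp add: right_diff_distrib)
    also have "(\<Sum>a\<in>R - {i0}. c a * d a * V (symd I' a) K) / c i0 = - (\<Sum>a\<in>R - {i0}. (- (c a * d a) / c i0) * V (symd I' a) K)"
      by (simp add: sum_negf[symmetric] sum_divide_distrib)
    also have "(coeff h g / c i0) * V I' K - - (\<Sum>a\<in>R - {i0}. (- (c a * d a) / c i0) * V (symd I' a) K)
      = (coeff h g / c i0) * V I' K + (\<Sum>a\<in>R - {i0}. (- (c a * d a) / c i0) * V (symd I' a) K)"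
      by simp
    finally show "V I K = (coeff h g / c i0) * V I' K + (\<Sum>a\<in>R - {i0}. (- (c a * d a) / c i0) * V (symd I' a) K)" .
  qed
  also have "\<dots> \<in> fv.span (V ` Sg)"
  proof (rule span_lincomb2)
    show "finite (R - {i0})" by simp
    show "V I' \<in> fv.span (V ` Sg)"
    proof (cases "card I' = g")
      case True then show ?thesis using I'R by (auto simp: Sg_def intro: fv.span_base)
    next
      case False
      then have "g + 1 \<le> card I'" using cI' cI by simp
      moreover have "card I' < card I" using cI' cI by simp
      ultimately show ?thesis using less.hyps I'R by blast
    qed
    fix a assume a: "a \<in> R - {i0}"
    show "- (c a * d a) / c i0 = 0 \<or> V (symd I' a) \<in> fv.span (V ` Sg)"
    proof (cases "a \<in> I")
      case False
      then have "poly h (\<omega> a) = 0" unfolding h_def using a by (intro linprod(3)) auto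
      then show ?thesis by (simp add: c_def)
    next
      case True
      then have aI': "a \<in> I'" using a by (auto simp: I'_def)
      then have sy: "symd I' a = I' - {a}" by (simp add: symd_def)
      have c2: "card (I' - {a}) = card I - 2" using aI' fin' cI' by simp
      have sub: "I' - {a} \<subseteq> R" using I'R by auto
      consider "card (I' - {a}) = g" | "card (I' - {a}) + 1 = g" | "g + 1 \<le> card (I' - {a})"
        using c2 cI by linarith
      then show ?thesis
      proof cases
        case 1 then show ?thesis using sub sy by (auto simp: Sg_def intro: fv.span_base)
      next
        case 2 then show ?thesis using up_span[of 1] sub sy by auto
      next
        case 3
        moreover have "card (I' - {a}) < card I" using c2 cI by simp
        ultimately show ?thesis using less.hyps sub sy by auto
      qed
    qed
  qed
  finally show ?case .
qed

lemma all_span: "I \<subseteq> R \<Longrightarrow> V I \<in> fv.span (V ` Sg)"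
proof -
  assume I: "I \<subseteq> R"
  show ?thesis
  proof (cases "card I \<le> g")
    case True
    then show ?thesis using up_span[of "g - card I"] I by auto
  next
    case False
    then show ?thesis using down_span[OF I] by simp
  qed
qed

end


context hyp begin

lemma tri_exists: "N \<le> 2*g \<Longrightarrow> \<exists>l. \<forall>m\<le>N. (\<Sum>n\<in>{0..m}. coeff (pbas g f m) n * l n) = t m"
proof (induction N)
  case 0
  show ?case by (rule exI[of _ "\<lambda>_. t 0"]) (simp add: pbas_coeff(1))
next
  case (Suc N)
  then obtain l where l: "\<forall>m\<le>N. (\<Sum>n\<in>{0..m}. coeff (pbas g f m) n * l n) = t m" by auto
  define S where "S = (\<Sum>n\<in>{0..N}. coeff (pbas g f (Suc N)) n * l n)"
  define l' where "l' = l(Suc N := t (Suc N) - S)"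
  have "\<forall>m\<le>Suc N. (\<Sum>n\<in>{0..m}. coeff (pbas g f m) n * l' n) = t m"
  proof (intro allI impI)
    fix m assume m: "m \<le> Suc N"
    show "(\<Sum>n\<in>{0..m}. coeff (pbas g f m) n * l' n) = t m"
    proof (cases "m = Suc N")
      case True
      have "(\<Sum>n\<in>{0..Suc N}. coeff (pbas g f (Suc N)) n * l' n)
          = (\<Sum>n\<in>{0..N}. coeff (pbas g f (Suc N)) n * l' n) + coeff (pbas g f (Suc N)) (Suc N) * l' (Suc N)"
        by (simp add: sum.atLeast0_atMost_Suc)
      also have "(\<Sum>n\<in>{0..N}. coeff (pbas g f (Suc N)) n * l' n) = S"
        unfolding S_def l'_def by (intro sum.cong) auto
      also have "coeff (pbas g f (Suc N)) (Suc N) = 1" using Suc.prems by (simp add: pbas_coeff(1))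
      finally show ?thesis using True by (simp add: l'_def)
    next
      case False
      then have "m \<le> N" using m by simp
      have "(\<Sum>n\<in>{0..m}. coeff (pbas g f m) n * l' n) = (\<Sum>n\<in>{0..m}. coeff (pbas g f m) n * l n)"
        unfolding l'_def using \<open>m \<le> N\<close> by (intro sum.cong) auto
      then show ?thesis using l \<open>m \<le> N\<close> by simp
    qed
  qed
  then show ?case by blast
qed

lemma coef_exists: "\<exists>c. \<forall>m\<le>2*g. (\<Sum>a\<in>R. c a * poly (pbas g f m) (\<omega> a)) = t m"
proof -
  obtain l where l: "\<forall>m\<le>2*g. (\<Sum>n\<in>{0..m}. coeff (pbas g f m) n * l n) = t m"
    using tri_exists[of "2*g" t] by auto
  define c where "c a = Lf l (ep a) / Aa a" for a
  have "(\<Sum>a\<in>R. c a * poly (pbas g f m) (\<omega> a)) = t m" if m: "m \<le> 2*g" for m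
  proof -
    have "(\<Sum>a\<in>R. c a * poly (pbas g f m) (\<omega> a)) = (\<Sum>a\<in>R. poly (pbas g f m) (\<omega> a) / Aa a * Lf l (ep a))"
      unfolding c_def by (intro sum.cong) auto
    also have "\<dots> = Lf l (pbas g f m)"
      by (rule lagrange_L[symmetric]) (use pbas_degree[OF m] m in simp)
    also have "\<dots> = (\<Sum>n\<in>{0..m}. coeff (pbas g f m) n * l n)"
      unfolding Lf_def
      by (rule sum.mono_neutral_right) (use m pbas_coeff(2)[OF m] in auto)
    also have "\<dots> = t m" using l m by simp
    finally show ?thesis .
  qed
  then show ?thesis by blast
qed

lemma W_comb:
  assumes k: "k \<in> {1..g}"
  shows "\<exists>c. \<forall>s\<in>spin_space g. Wop k s = (\<lambda>K. \<Sum>a\<in>R. c a * T a s K)"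
proof -
  define t where "t m = (if m = g - k then 1 else (0::'a))" for m
  obtain c where c: "\<forall>m\<le>2*g. (\<Sum>a\<in>R. c a * poly (pbas g f m) (\<omega> a)) = t m"
    using coef_exists by blast
  have cu: "(\<Sum>a\<in>R. c a * up a i) = (if i = k then 1 else 0)" if i: "i \<in> {1..g}" for i
  proof -
    have "(\<Sum>a\<in>R. c a * up a i) = (\<Sum>a\<in>R. c a * poly (pbas g f (g - i)) (\<omega> a))"
    proof (intro sum.cong refl)
      fix a assume "a \<in> R"
      moreover have "2*g - (g+i) = g - i" by simp
      ultimately show "c a * up a i = c a * poly (pbas g f (g - i)) (\<omega> a)" by (simp add: up_def pcoord_ep)
    qed
    also have "\<dots> = t (g - i)" using c by simp
    finally show ?thesis using i k by (auto simp: t_def)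
  qed
  have cm: "(\<Sum>a\<in>R. c a * um a i) = 0" if i: "i \<in> {1..g}" for i
  proof -
    have "(\<Sum>a\<in>R. c a * um a i) = (\<Sum>a\<in>R. c a * poly (pbas g f (g + i)) (\<omega> a))"
      using i by (intro sum.cong refl) (simp add: um_val)
    also have "\<dots> = t (g + i)" using c i by simp
    finally show ?thesis using i k by (auto simp: t_def)
  qed
  have c0: "(\<Sum>a\<in>R. c a * u0 a) = 0"
  proof -
    have "(\<Sum>a\<in>R. c a * u0 a) = (\<Sum>a\<in>R. c a * poly (pbas g f g) (\<omega> a))"
      by (intro sum.cong refl) (simp add: u0_val pbas_low poly_monom)
    also have "\<dots> = t g" using c by simp
    finally show ?thesis using k by (auto simp: t_def)
  qed
  have "Wop k s = (\<lambda>K. \<Sum>a\<in>R. c a * T a s K)" if s: "s \<in> spin_space g" for s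
  proof
    fix K
    have "(\<Sum>a\<in>R. c a * T a s K) = (\<Sum>a\<in>R. c a * Xop g (up a) (um a) (u0 a) s K)"
      by (simp add: T_Xop[OF s])
    also have "\<dots> = Xop g (\<lambda>i. \<Sum>a\<in>R. c a * up a i) (\<lambda>i. \<Sum>a\<in>R. c a * um a i) (\<Sum>a\<in>R. c a * u0 a) s K"
      by (rule Xop_lin)
    also have "\<dots> = (\<Sum>i\<in>{1..g}. (if i = k then 1 else 0) * Wop i s K)"
      unfolding Xop_def c0 using cu cm by simp
    also have "\<dots> = Wop k s K" using k by (simp add: if_distrib[of "\<lambda>x. x * _"] sum.delta' cong: if_cong)
    finally show "Wop k s K = (\<Sum>a\<in>R. c a * T a s K)" by simp
  qed
  then show ?thesis by blast
qed

abbreviation "Uall \<equiv> fv.span (V ` {I. I \<subseteq> R})"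

lemma spin_subspace: "fv.subspace (spin_space g)"
  unfolding fv.subspace_def by (auto simp: spin_space_def sc_def zero_fun_def)

lemma U_spin: "Uall \<subseteq> spin_space g"
  by (rule fv.span_minimal) (auto intro: spin_subspace TL_spin one_spin)

lemma T_lin: "T a (\<lambda>K. c * x K + y K) = (\<lambda>K. c * T a x K + T a y K)"
  by (simp add: T_def vact_add vact_scale)

lemma T_maps: "u \<in> Uall \<Longrightarrow> a \<in> R \<Longrightarrow> T a u \<in> Uall"
proof (induction rule: fv.span_induct_alt)
  case base
  have "T a 0 = 0" by (simp add: T_def vact_def zero_fun_def)
  then show ?case by (metis fv.span_zero)
next
  case (step c x y)
  then obtain I where I: "I \<subseteq> R" "x = V I" by auto
  have fin: "finite I" using I(1) finite_subset by blast
  obtain d where d: "T a (V I) = (\<lambda>K. d * V (symd I a) K)"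
    using lemmaL[OF fin I(1) step.prems one_spin] by blast
  have "T a (sc c x + y) = sc c (T a x) + T a y"
    using T_lin[of a c x y] by (simp add: sc_def plus_fun_def)
  moreover have "T a x \<in> Uall"
    using d I symd_sub[OF I(1) step.prems] fv.span_scale[OF fv.span_base, of "V (symd I a)" _ d]
    by (auto simp: sc_def)
  ultimately show ?case using step.IH step.prems by (metis fv.span_add fv.span_scale)
qed

lemma W_maps: "u \<in> Uall \<Longrightarrow> k \<in> {1..g} \<Longrightarrow> Wop k u \<in> Uall"
proof -
  assume u: "u \<in> Uall" and k: "k \<in> {1..g}"
  obtain c where c: "\<forall>s\<in>spin_space g. Wop k s = (\<lambda>K. \<Sum>a\<in>R. c a * T a s K)"
    using W_comb[OF k] by blast
  have "Wop k u = (\<lambda>K. \<Sum>a\<in>R. c a * T a u K)" using c U_spin u by auto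
  also have "\<dots> \<in> Uall" by (rule span_lincomb) (use T_maps[OF u] in auto)
  finally show ?thesis .
qed

lemma Wop_sbasis: "k \<notin> K \<Longrightarrow> Wop k (sbasis K) = (\<lambda>K'. wsign K k * sbasis (insert k K) K')"
proof
  fix K' assume k: "k \<notin> K"
  show "Wop k (sbasis K) K' = wsign K k * sbasis (insert k K) K'"
  proof (cases "K' = insert k K")
    case True
    then have "K' - {k} = K" using k by auto
    then show ?thesis using True by (simp add: Wop_def sbasis_def)
  next
    case False
    then have "k \<in> K' \<Longrightarrow> K' - {k} \<noteq> K" by auto
    then show ?thesis using False by (auto simp: Wop_def sbasis_def)
  qed
qed

lemma sbasis_in: "finite K \<Longrightarrow> K \<subseteq> {1..g} \<Longrightarrow> sbasis K \<in> Uall"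
proof (induction K rule: finite_induct)
  case empty
  have "V {} = sbasis {}" by (simp add: one_S_def)
  then show ?case by (metis (mono_tags, lifting) empty_subsetI fv.span_base image_eqI mem_Collect_eq)
next
  case (insert k K)
  have k: "k \<in> {1..g}" using insert.prems by auto
  have sp: "sbasis K \<in> Uall" using insert.IH insert.prems by auto
  have "sbasis (insert k K) = sc (wsign K k) (Wop k (sbasis K))"
    unfolding sc_def Wop_sbasis[OF insert.hyps(2)] by (simp add: mult.assoc[symmetric] wsign_sq)
  also have "\<dots> \<in> Uall" by (rule fv.span_scale) (rule W_maps[OF sp k])
  finally show ?case .
qed

lemma spin_in: "s \<in> spin_space g \<Longrightarrow> s \<in> Uall"
proof -
  assume s: "s \<in> spin_space g"
  have "s = (\<lambda>K. \<Sum>J\<in>Pow {1..g}. s J * sbasis J K)"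
  proof
    fix K
    show "s K = (\<Sum>J\<in>Pow {1..g}. s J * sbasis J K)"
      using spinD[OF s, of K] by (simp add: sbasis_def if_distrib[of "\<lambda>x. _ * x"] sum.delta cong: if_cong)
  qed
  also have "\<dots> \<in> Uall"
  proof (rule span_lincomb)
    fix J assume J: "J \<in> Pow {1..g}"
    then have "finite J" using finite_subset by blast
    then show "s J = 0 \<or> sbasis J \<in> Uall" using sbasis_in J by blast
  qed simp
  finally show ?thesis .
qed

lemma spin_spanG: "spin_space g \<subseteq> fv.span (V ` Sg)"
proof -
  have "Uall \<subseteq> fv.span (V ` Sg)"
  proof (rule fv.span_minimal)
    show "V ` {I. I \<subseteq> R} \<subseteq> fv.span (V ` Sg)" using all_span by blast
  qed simp
  then show ?thesis using spin_in by blast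
qed

end


context hyp begin

lemma delta_nz: "J \<subseteq> R \<Longrightarrow> deltaI \<omega> J \<noteq> 0"
proof -
  assume J: "J \<subseteq> R"
  have fin: "finite {(a, b). a \<in> J \<and> b \<in> J \<and> a < b}"
    by (rule finite_subset[of _ "J \<times> J"]) (use J finite_subset in auto)
  have "\<omega> b - \<omega> a \<noteq> 0" if "a \<in> J" "b \<in> J" "a < b" for a b
  proof
    assume "\<omega> b - \<omega> a = 0"
    moreover have "a \<in> R" "b \<in> R" using that J by auto
    ultimately have "a = b" using inj_onD[OF dist, of a b] by simp
    then show False using that by simp
  qed
  then show ?thesis unfolding deltaI_def using fin by auto
qed

lemma MI_eq: "MI g f \<omega> J one_S = sc (inverse (deltaI \<omega> J)) (V J)"
  by (simp add: MI_def sc_def TL_def)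

abbreviation "Gp \<equiv> (\<lambda>J. MI g f \<omega> J one_S) ` Sg"

lemma Gp_spin: "Gp \<subseteq> spin_space g"
proof
  fix x assume "x \<in> Gp"
  then obtain J where "x = sc (inverse (deltaI \<omega> J)) (V J)" by (auto simp: MI_eq)
  then show "x \<in> spin_space g" using TL_spin[OF one_spin, of J]
    by (auto simp: sc_def spin_space_def)
qed

lemma span_Gp: "fv.span Gp = spin_space g"
proof
  show "fv.span Gp \<subseteq> spin_space g"
    by (rule fv.span_minimal[OF Gp_spin spin_subspace])
  have "fv.span (V ` Sg) \<subseteq> fv.span Gp"
  proof (rule fv.span_minimal)
    show "V ` Sg \<subseteq> fv.span Gp"
    proof
      fix x assume "x \<in> V ` Sg"
      then obtain J where J: "J \<in> Sg" "x = V J" by auto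
      have dz: "deltaI \<omega> J \<noteq> 0" using J delta_nz by (auto simp: Sg_def)
      have "x = sc (deltaI \<omega> J) (MI g f \<omega> J one_S)"
        using J dz by (simp add: MI_eq sc_def mult.assoc[symmetric])
      moreover have "MI g f \<omega> J one_S \<in> fv.span Gp" using J by (auto intro: fv.span_base)
      ultimately show "x \<in> fv.span Gp" by (simp add: fv.span_scale)
    qed
  qed simp
  then show "spin_space g \<subseteq> fv.span Gp" using spin_spanG by blast
qed

lemma finite_Sg: "finite Sg"
  by (rule finite_subset[of _ "Pow R"]) (auto simp: Sg_def)

abbreviation "Bs \<equiv> sbasis ` Pow {1..g} :: (nat set \<Rightarrow> 'a) set"

lemma sbasis_inj: "inj_on (sbasis :: nat set \<Rightarrow> nat set \<Rightarrow> 'a) X"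
proof (rule inj_onI)
  fix J K assume "(sbasis J :: nat set \<Rightarrow> 'a) = sbasis K"
  then have "(sbasis J J :: 'a) = sbasis K J" by simp
  then show "J = K" by (simp add: sbasis_def split: if_splits)
qed

lemma card_Bs: "card Bs = 2 ^ g"
  by (simp add: card_image[OF sbasis_inj] card_Pow)

lemma sum_Bs: "(\<Sum>v\<in>Bs. F v) = (\<Sum>J\<in>Pow {1..g}. F (sbasis J))"
  using sum.reindex[OF sbasis_inj, of F "Pow {1..g}"] by (simp add: comp_def)

lemma Bs_indep: "fv.independent Bs"
proof -
  have "\<not> (\<exists>u. (\<exists>v\<in>Bs. u v \<noteq> 0) \<and> (\<Sum>v\<in>Bs. sc (u v) v) = 0)"
  proof
    assume "\<exists>u. (\<exists>v\<in>Bs. u v \<noteq> 0) \<and> (\<Sum>v\<in>Bs. sc (u v) v) = 0"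
    then obtain u J0 where J0: "J0 \<in> Pow {1..g}" "u (sbasis J0) \<noteq> 0" and z: "(\<Sum>v\<in>Bs. sc (u v) v) = 0"
      by auto
    have "0 = (\<Sum>v\<in>Bs. sc (u v) v) J0" using z by simp
    also have "\<dots> = (\<Sum>v\<in>Bs. u v * v J0)"
      by (simp only: fun_sum_apply sc_def)
    also have "\<dots> = (\<Sum>J\<in>Pow {1..g}. u (sbasis J) * sbasis J J0)"
      by (rule sum_Bs)
    also have "\<dots> = u (sbasis J0)"
      using J0 by (simp add: sbasis_def if_distrib[of "\<lambda>x. _ * x"] sum.delta sum.delta' cong: if_cong)
    finally show False using J0 by simp
  qed
  then show ?thesis using fv.dependent_finite[of Bs] by auto
qed

lemma spin_Bs: "spin_space g \<subseteq> fv.span Bs"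
proof
  fix s :: "nat set \<Rightarrow> 'a" assume s: "s \<in> spin_space g"
  have "s = (\<lambda>K. \<Sum>J\<in>Pow {1..g}. s J * sbasis J K)"
  proof
    fix K
    show "s K = (\<Sum>J\<in>Pow {1..g}. s J * sbasis J K)"
      using spinD[OF s, of K] by (simp add: sbasis_def if_distrib[of "\<lambda>x. _ * x"] sum.delta cong: if_cong)
  qed
  also have "\<dots> \<in> fv.span Bs"
    by (rule span_lincomb) (auto intro: fv.span_base)
  finally show "s \<in> fv.span Bs" .
qed

lemma Bs_spin: "Bs \<subseteq> spin_space g"
  by (auto simp: spin_space_def sbasis_def split: if_splits)

lemma main:
  "\<exists>I :: nat \<Rightarrow> nat set.
     (\<forall>j\<in>{1..2^g}. I j \<subseteq> {1..2*g+1} \<and> card (I j) = g) \<and>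
     (\<forall>s\<in>spin_space g. \<exists>!c :: nat \<Rightarrow> 'a.
         (\<forall>j. j \<notin> {1..2^g} \<longrightarrow> c j = 0) \<and>
         s = (\<lambda>K. \<Sum>j\<in>{1..2^g}. c j * MI g f \<omega> (I j) one_S K))"
proof -
  obtain B where B: "B \<subseteq> Gp" "fv.independent B" "Gp \<subseteq> fv.span B"
    using fv.maximal_independent_subset[of Gp] by blast
  have finB: "finite B" using B(1) finite_Sg finite_subset by blast
  have spanB: "fv.span B = spin_space g"
  proof
    show "fv.span B \<subseteq> spin_space g" using fv.span_mono[OF B(1)] span_Gp by simp
    show "spin_space g \<subseteq> fv.span B"
      using fv.span_minimal[OF B(3) fv.subspace_span] span_Gp by simp
  qed
  have cB: "card B = 2 ^ g"
  proof (rule antisym)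
    have "B \<subseteq> fv.span Bs" using spin_Bs B(1) Gp_spin fv.span_superset[of B] spanB by blast
    moreover have "finite Bs" by simp
    ultimately show "card B \<le> 2 ^ g"
      using fv.independent_span_bound[OF _ B(2)] card_Bs by metis
    have "Bs \<subseteq> fv.span B" using Bs_spin spanB by simp
    then show "2 ^ g \<le> card B"
      using fv.independent_span_bound[OF finB Bs_indep] card_Bs by simp
  qed
  obtain e where e: "bij_betw e {1..2^g::nat} B"
    using ex_bij_betw_nat_finite_1[OF finB] cB by auto
  define I where "I j = (SOME J. J \<in> Sg \<and> MI g f \<omega> J one_S = e j)" for j
  have I: "I j \<in> Sg \<and> MI g f \<omega> (I j) one_S = e j" if j: "j \<in> {1..2^g}" for j
  proof -
    have "e j \<in> Gp" using e j B(1) by (auto simp: bij_betw_def)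
    then have "\<exists>J. J \<in> Sg \<and> MI g f \<omega> J one_S = e j" by auto
    then show ?thesis unfolding I_def by (rule someI_ex)
  qed
  let ?N = "{1..2^g::nat}"
  have rep: "(\<lambda>K. \<Sum>j\<in>?N. c j * MI g f \<omega> (I j) one_S K) = (\<Sum>v\<in>B. sc (c (inv_into ?N e v)) v)" for c
  proof
    fix K
    have "(\<Sum>v\<in>B. sc (c (inv_into ?N e v)) v) K = (\<Sum>v\<in>B. c (inv_into ?N e v) * v K)"
      by (simp add: fun_sum_apply sc_def)
    also have "\<dots> = (\<Sum>j\<in>?N. c (inv_into ?N e (e j)) * e j K)"
      by (rule sum.reindex_bij_betw[OF e, symmetric])
    also have "\<dots> = (\<Sum>j\<in>?N. c j * MI g f \<omega> (I j) one_S K)"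
      using e I by (intro sum.cong refl) (simp add: bij_betw_inv_into_left)
    finally show "(\<Sum>j\<in>?N. c j * MI g f \<omega> (I j) one_S K) = (\<Sum>v\<in>B. sc (c (inv_into ?N e v)) v) K" by simp
  qed
  have "\<forall>s\<in>spin_space g. \<exists>!c :: nat \<Rightarrow> 'a. (\<forall>j. j \<notin> ?N \<longrightarrow> c j = 0) \<and>
         s = (\<lambda>K. \<Sum>j\<in>?N. c j * MI g f \<omega> (I j) one_S K)"
  proof
    fix s :: "nat set \<Rightarrow> 'a" assume s: "s \<in> spin_space g"
    then have "s \<in> fv.span B" using spanB by simp
    then obtain u where u: "s = (\<Sum>v\<in>B. sc (u v) v)" using fv.span_finite[OF finB] by auto
    define c where "c j = (if j \<in> ?N then u (e j) else 0)" for j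
    show "\<exists>!c :: nat \<Rightarrow> 'a. (\<forall>j. j \<notin> ?N \<longrightarrow> c j = 0) \<and> s = (\<lambda>K. \<Sum>j\<in>?N. c j * MI g f \<omega> (I j) one_S K)"
    proof (rule ex_ex1I)
      have "(\<Sum>v\<in>B. sc (c (inv_into ?N e v)) v) = (\<Sum>v\<in>B. sc (u v) v)"
      proof (intro sum.cong refl)
        fix v assume v: "v \<in> B"
        have "inv_into ?N e v \<in> ?N" using e v by (metis bij_betw_def inv_into_into)
        moreover have "e (inv_into ?N e v) = v" using e v by (meson bij_betw_inv_into_right)
        ultimately show "sc (c (inv_into ?N e v)) v = sc (u v) v" by (simp add: c_def)
      qed
      then show "\<exists>c. (\<forall>j. j \<notin> ?N \<longrightarrow> c j = 0) \<and> s = (\<lambda>K. \<Sum>j\<in>?N. c j * MI g f \<omega> (I j) one_S K)"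
        using u rep[of c] by (intro exI[of _ c]) (auto simp: c_def)
    next
      fix c1 c2 :: "nat \<Rightarrow> 'a"
      assume c1: "(\<forall>j. j \<notin> ?N \<longrightarrow> c1 j = 0) \<and> s = (\<lambda>K. \<Sum>j\<in>?N. c1 j * MI g f \<omega> (I j) one_S K)"
        and c2: "(\<forall>j. j \<notin> ?N \<longrightarrow> c2 j = 0) \<and> s = (\<lambda>K. \<Sum>j\<in>?N. c2 j * MI g f \<omega> (I j) one_S K)"
      define w where "w v = c1 (inv_into ?N e v) - c2 (inv_into ?N e v)" for v
      have "(\<Sum>v\<in>B. sc (w v) v) = (\<Sum>v\<in>B. sc (c1 (inv_into ?N e v)) v) - (\<Sum>v\<in>B. sc (c2 (inv_into ?N e v)) v)"
        by (simp add: w_def sum_subtractf[symmetric] sc_def fun_eq_iff algebra_simps fun_sum_apply)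
      also have "\<dots> = 0" using c1 c2 rep[of c1] rep[of c2] by simp
      finally have z: "(\<Sum>v\<in>B. sc (w v) v) = 0" .
      have w0: "\<forall>v\<in>B. w v = 0" using B(2) z fv.dependent_finite[OF finB] by auto
      show "c1 = c2"
      proof
        fix j
        show "c1 j = c2 j"
        proof (cases "j \<in> ?N")
          case True
          then have "e j \<in> B" using e by (auto simp: bij_betw_def)
          then have "w (e j) = 0" using w0 by simp
          moreover have "inv_into ?N e (e j) = j" using e True by (simp add: bij_betw_inv_into_left)
          ultimately show ?thesis by (simp add: w_def)
        next
          case False then show ?thesis using c1 c2 by simp
        qed
      qed
    qed
  qed
  moreover have "\<forall>j\<in>?N. I j \<subseteq> {1..2*g+1} \<and> card (I j) = g"
    using I by (auto simp: Sg_def)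
  ultimately show ?thesis by blast
qed

end

theorem proposition4p7:
  fixes g :: nat and f :: "'a::field poly" and \<omega> :: "nat \<Rightarrow> 'a"
  assumes char: "(2::'a) \<noteq> 0"
    and sepcl: "separably_closed TYPE('a)"
    and g1: "g \<ge> 1"
    and roots: "f = (\<Prod>i\<in>{1..2*g+1}. [:- \<omega> i, 1:])"
    and distinct: "inj_on \<omega> {1..2*g+1}"
  shows "\<exists>I :: nat \<Rightarrow> nat set.
     (\<forall>j\<in>{1..2^g}. I j \<subseteq> {1..2*g+1} \<and> card (I j) = g) \<and>
     (\<forall>s\<in>spin_space g. \<exists>!c :: nat \<Rightarrow> 'a.
         (\<forall>j. j \<notin> {1..2^g} \<longrightarrow> c j = 0) \<and>
         s = (\<lambda>K. \<Sum>j\<in>{1..2^g}. c j * MI g f \<omega> (I j) one_S K))"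
proof -
  interpret hyp g f \<omega> using char g1 roots distinct by unfold_locales
  show ?thesis by (rule main)
qed

end
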